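(* Up to isomorphism, there are exactly two connected strongly regular signed graphs that are $5$-regular and $1$ net-regular, namely $\dot G_2$ (complete, parameters $(6,5,-4,4)$) and $\dot S^1_{12}$ (parameters $(12,5,2,1,-2)$), defined in the context.
   Context: A signed graph $\dot G=(G,\sigma)$ is a simple graph $G$ with $\sigma:E(G)\to\{\pm1\}$; adjacency matrix $A_{\dot G}$ has entries $\sigma(v_iv_j)$ for adjacent vertices and $0$ otherwise. Degree and connectedness refer to $G$; the net-degree of $v$ is $d^+(v)-d^-(v)$ (numbers of positive minus negative incident edges); $\rho$ net-regular means every vertex has net-degree $\rho$. $\dot G$ on $n$ vertices is a strongly regular signed graph (SRSG) if it is neither a homogeneous (all edges of one sign) complete graph nor edgeless, and there exist $r\in\mathbb N$, $a,b,c\in\mathbb Z$ with $(A^2_{\dot G})_{ii}=r$, $(A^2_{\dot G})_{ij}=a$ whenever $v_iv_j$ is a positive edge, $b$ whenever it is a negative edge, and $c$ whenever $i\ne j$, $v_i\not\sim v_j$. Parameters are $(n,r,a,b,c)$ if non-complete, $(n,r,a,b)$ if complete. Isomorphism means sign-preserving graph isomorphism. $\dot G_2$ is $K_6$ whose negative edges form two vertex-disjoint triangles (so the positive edges form $K_{3,3}$). $\dot S^1_{12}$ has vertex set $\{(s,t): s\in\{1,2,3,4\}, t\in\{1,2,3\}\}$, with $(s,t)(s',t)$ a positive edge for all $s\ne s'$, $(s,t)(s,t')$ a negative edge for all $t\neq t'$, and no other edges (the Cartesian product $K_4\,\square\, K_3$ with the $K_4$-edges positive and the $K_3$-edges negative).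 *)

theory Defs
  imports Main
begin

text \<open>A signed graph is given by a finite vertex set V and a signed adjacency
  function sigma: sigma u v is the entry of the signed adjacency matrix,
  i.e. 1 (positive edge), -1 (negative edge) or 0 (no edge).\<close>

definition signed_graph :: "'a set \<Rightarrow> ('a \<Rightarrow> 'a \<Rightarrow> int) \<Rightarrow> bool" where
  "signed_graph V \<sigma> \<longleftrightarrow> finite V
     \<and> (\<forall>u v. \<sigma> u v \<in> {-1, 0, 1})
     \<and> (\<forall>u v. \<sigma> u v = \<sigma> v u)
     \<and> (\<forall>u. \<sigma> u u = 0)
     \<and> (\<forall>u v. \<sigma> u v \<noteq> 0 \<longrightarrow> u \<in> V \<and> v \<in> V)"

definition adj_sq :: "'a set \<Rightarrow> ('a \<Rightarrow> 'a \<Rightarrow> int) \<Rightarrow> 'a \<Rightarrow> 'a \<Rightarrow> int" where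
  "adj_sq V \<sigma> u v = (\<Sum>w\<in>V. \<sigma> u w * \<sigma> w v)"

definition sg_degree :: "'a set \<Rightarrow> ('a \<Rightarrow> 'a \<Rightarrow> int) \<Rightarrow> 'a \<Rightarrow> nat" where
  "sg_degree V \<sigma> v = card {w\<in>V. \<sigma> v w \<noteq> 0}"

definition net_degree :: "'a set \<Rightarrow> ('a \<Rightarrow> 'a \<Rightarrow> int) \<Rightarrow> 'a \<Rightarrow> int" where
  "net_degree V \<sigma> v = int (card {w\<in>V. \<sigma> v w = 1}) - int (card {w\<in>V. \<sigma> v w = -1})"

definition sg_regular :: "'a set \<Rightarrow> ('a \<Rightarrow> 'a \<Rightarrow> int) \<Rightarrow> nat \<Rightarrow> bool" where
  "sg_regular V \<sigma> r \<longleftrightarrow> (\<forall>v\<in>V. sg_degree V \<sigma> v = r)"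

definition net_regular :: "'a set \<Rightarrow> ('a \<Rightarrow> 'a \<Rightarrow> int) \<Rightarrow> int \<Rightarrow> bool" where
  "net_regular V \<sigma> \<rho> \<longleftrightarrow> (\<forall>v\<in>V. net_degree V \<sigma> v = \<rho>)"

definition sg_connected :: "'a set \<Rightarrow> ('a \<Rightarrow> 'a \<Rightarrow> int) \<Rightarrow> bool" where
  "sg_connected V \<sigma> \<longleftrightarrow> V \<noteq> {} \<and>
     (\<forall>u\<in>V. \<forall>v\<in>V. (\<lambda>x y. \<sigma> x y \<noteq> 0)\<^sup>*\<^sup>* u v)"

definition sg_complete :: "'a set \<Rightarrow> ('a \<Rightarrow> 'a \<Rightarrow> int) \<Rightarrow> bool" where
  "sg_complete V \<sigma> \<longleftrightarrow> (\<forall>u\<in>V. \<forall>v\<in>V. u \<noteq> v \<longrightarrow> \<sigma> u v \<noteq> 0)"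

definition sg_homogeneous :: "'a set \<Rightarrow> ('a \<Rightarrow> 'a \<Rightarrow> int) \<Rightarrow> bool" where
  "sg_homogeneous V \<sigma> \<longleftrightarrow> (\<forall>u\<in>V. \<forall>v\<in>V. \<sigma> u v \<ge> 0) \<or> (\<forall>u\<in>V. \<forall>v\<in>V. \<sigma> u v \<le> 0)"

definition sg_edgeless :: "'a set \<Rightarrow> ('a \<Rightarrow> 'a \<Rightarrow> int) \<Rightarrow> bool" where
  "sg_edgeless V \<sigma> \<longleftrightarrow> (\<forall>u\<in>V. \<forall>v\<in>V. \<sigma> u v = 0)"

definition srsg_conds :: "'a set \<Rightarrow> ('a \<Rightarrow> 'a \<Rightarrow> int) \<Rightarrow> nat \<Rightarrow> int \<Rightarrow> int \<Rightarrow> int \<Rightarrow> bool" where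
  "srsg_conds V \<sigma> r a b c \<longleftrightarrow>
     (\<forall>i\<in>V. adj_sq V \<sigma> i i = int r)
   \<and> (\<forall>i\<in>V. \<forall>j\<in>V. \<sigma> i j = 1 \<longrightarrow> adj_sq V \<sigma> i j = a)
   \<and> (\<forall>i\<in>V. \<forall>j\<in>V. \<sigma> i j = -1 \<longrightarrow> adj_sq V \<sigma> i j = b)
   \<and> (\<forall>i\<in>V. \<forall>j\<in>V. i \<noteq> j \<and> \<sigma> i j = 0 \<longrightarrow> adj_sq V \<sigma> i j = c)"

definition SRSG :: "'a set \<Rightarrow> ('a \<Rightarrow> 'a \<Rightarrow> int) \<Rightarrow> bool" where
  "SRSG V \<sigma> \<longleftrightarrow> signed_graph V \<sigma>
     \<and> \<not> (sg_complete V \<sigma> \<and> sg_homogeneous V \<sigma>)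
     \<and> \<not> sg_edgeless V \<sigma>
     \<and> (\<exists>r a b c. srsg_conds V \<sigma> r a b c)"

definition srsg_params :: "'a set \<Rightarrow> ('a \<Rightarrow> 'a \<Rightarrow> int) \<Rightarrow> nat \<Rightarrow> nat \<Rightarrow> int \<Rightarrow> int \<Rightarrow> int \<Rightarrow> bool" where
  "srsg_params V \<sigma> n r a b c \<longleftrightarrow> SRSG V \<sigma> \<and> \<not> sg_complete V \<sigma> \<and> card V = n
     \<and> srsg_conds V \<sigma> r a b c"

definition srsg_params_complete :: "'a set \<Rightarrow> ('a \<Rightarrow> 'a \<Rightarrow> int) \<Rightarrow> nat \<Rightarrow> nat \<Rightarrow> int \<Rightarrow> int \<Rightarrow> bool" where
  "srsg_params_complete V \<sigma> n r a b \<longleftrightarrow> SRSG V \<sigma> \<and> sg_complete V \<sigma> \<and> card V = n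
     \<and> (\<forall>c. srsg_conds V \<sigma> r a b c)"

definition sg_iso :: "'a set \<Rightarrow> ('a \<Rightarrow> 'a \<Rightarrow> int) \<Rightarrow> 'b set \<Rightarrow> ('b \<Rightarrow> 'b \<Rightarrow> int) \<Rightarrow> bool" where
  "sg_iso V1 \<sigma>1 V2 \<sigma>2 \<longleftrightarrow> (\<exists>f. bij_betw f V1 V2 \<and> (\<forall>u\<in>V1. \<forall>v\<in>V1. \<sigma>2 (f u) (f v) = \<sigma>1 u v))"

text \<open>G2: K_6 on {0..5} with negative triangles {0,1,2} and {3,4,5}.\<close>
definition G2_V :: "nat set" where "G2_V = {0..5}"
definition G2_sig :: "nat \<Rightarrow> nat \<Rightarrow> int" where
  "G2_sig u v = (if u \<in> G2_V \<and> v \<in> G2_V \<and> u \<noteq> v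
                 then (if (u < 3) = (v < 3) then -1 else 1) else 0)"

text \<open>S^1_12: K_4 (positive) box K_3 (negative) on {1..4} x {1..3}.\<close>
definition S12_V :: "(nat \<times> nat) set" where "S12_V = {1..4} \<times> {1..3}"
definition S12_sig :: "nat \<times> nat \<Rightarrow> nat \<times> nat \<Rightarrow> int" where
  "S12_sig x y = (if x \<in> S12_V \<and> y \<in> S12_V then
     (if snd x = snd y \<and> fst x \<noteq> fst y then 1
      else if fst x = fst y \<and> snd x \<noteq> snd y then -1 else 0) else 0)"

end

theory Submission
  imports Defs
begin

section \<open>Concrete graphs\<close>

lemma card_filter_list:
  "distinct xs \<Longrightarrow> card {w \<in> set xs. P w} = length (filter P xs)"
  by (metis distinct_card distinct_filter set_filter)

lemma sum_set_list:
  "distinct xs \<Longrightarrow> sum f (set xs) = sum_list (map f xs)"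
  by (simp add: sum.distinct_set_conv_list)

definition L6 :: "nat list" where "L6 = [0,1,2,3,4,5]"

lemma G2_V_L: "G2_V = set L6"
  unfolding G2_V_def L6_def by auto

lemma L6_dist: "distinct L6" by (simp add: L6_def)

lemma G2_sig_simp: "G2_sig u v = (if u \<le> 5 \<and> v \<le> 5 \<and> u \<noteq> v
                 then (if (u < 3) = (v < 3) then -1 else 1) else 0)"
  by (simp add: G2_sig_def G2_V_def)

lemma adjG: "adj_sq G2_V G2_sig x y = sum_list (map (\<lambda>w. G2_sig x w * G2_sig w y) L6)"
  unfolding adj_sq_def G2_V_L by (simp add: sum_set_list L6_dist)

lemma G2_adj: "\<forall>i\<in>G2_V. \<forall>j\<in>G2_V. adj_sq G2_V G2_sig i j =
   (if i = j then 5 else if G2_sig i j = 1 then -4 else 4)"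
  unfolding adjG unfolding G2_V_L by (simp add: L6_def G2_sig_simp)

lemma G2_sg: "signed_graph G2_V G2_sig"
  unfolding signed_graph_def by (auto simp: G2_sig_def G2_V_def)

lemma G2_complete: "sg_complete G2_V G2_sig"
  unfolding sg_complete_def by (auto simp: G2_sig_def)

lemma G2_card: "card G2_V = 6"
  unfolding G2_V_L by (simp add: L6_def)

lemma G2_conds: "srsg_conds G2_V G2_sig 5 (-4) 4 c"
  unfolding srsg_conds_def using G2_adj G2_complete unfolding sg_complete_def
  by (auto simp: G2_sig_def)

lemma G2_SRSG: "SRSG G2_V G2_sig"
  unfolding SRSG_def sg_homogeneous_def sg_edgeless_def
proof (intro conjI)
  show "signed_graph G2_V G2_sig" by (rule G2_sg)
  show "\<not> (sg_complete G2_V G2_sig \<and>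
        ((\<forall>u\<in>G2_V. \<forall>v\<in>G2_V. 0 \<le> G2_sig u v) \<or> (\<forall>u\<in>G2_V. \<forall>v\<in>G2_V. G2_sig u v \<le> 0)))"
  proof -
    have "G2_sig 0 1 = -1" "G2_sig 0 3 = 1" by (simp_all add: G2_sig_simp)
    moreover have "(0::nat) \<in> G2_V" "(1::nat) \<in> G2_V" "(3::nat) \<in> G2_V" by (simp_all add: G2_V_def)
    ultimately show ?thesis by force
  qed
  show "\<not> (\<forall>u\<in>G2_V. \<forall>v\<in>G2_V. G2_sig u v = 0)"
  proof -
    have "G2_sig 0 1 = -1" by (simp add: G2_sig_simp)
    moreover have "(0::nat) \<in> G2_V" "(1::nat) \<in> G2_V" by (simp_all add: G2_V_def)
    ultimately show ?thesis by force
  qed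
  show "\<exists>r a b c. srsg_conds G2_V G2_sig r a b c" using G2_conds by blast
qed

lemma G2_params: "srsg_params_complete G2_V G2_sig 6 5 (-4) 4"
  unfolding srsg_params_complete_def using G2_SRSG G2_complete G2_card G2_conds by blast

lemma complete_connected:
  assumes "sg_complete V s" "V \<noteq> {}"
  shows "sg_connected V s"
  unfolding sg_connected_def
proof (intro conjI ballI)
  fix u v assume "u \<in> V" "v \<in> V"
  show "(\<lambda>x y. s x y \<noteq> 0)\<^sup>*\<^sup>* u v"
  proof (cases "u = v")
    case False
    then have "s u v \<noteq> 0" using assms \<open>u\<in>V\<close> \<open>v\<in>V\<close> unfolding sg_complete_def by blast
    then show ?thesis by auto
  qed auto
qed (use assms in auto)

lemma G2_connected: "sg_connected G2_V G2_sig"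
  by (rule complete_connected[OF G2_complete]) (simp add: G2_V_def)

lemma G2_regular: "sg_regular G2_V G2_sig 5"
  unfolding sg_regular_def sg_degree_def G2_V_L
  by (simp add: card_filter_list L6_dist) (simp add: L6_def G2_sig_simp)

lemma G2_net: "net_regular G2_V G2_sig 1"
  unfolding net_regular_def net_degree_def G2_V_L
  by (simp add: card_filter_list L6_dist) (simp add: L6_def G2_sig_simp)

definition L12 :: "(nat \<times> nat) list" where
 "L12 = [(1,1),(1,2),(1,3),(2,1),(2,2),(2,3),(3,1),(3,2),(3,3),(4,1),(4,2),(4,3)]"
lemma i4: "{1..4::nat} = {1,2,3,4}" by auto
lemma i3: "{1..3::nat} = {1,2,3}" by auto
lemma S12_V_L: "S12_V = set L12"
  unfolding S12_V_def L12_def i4 i3 by auto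
lemma L12_dist: "distinct L12" by (simp add: L12_def)

lemma adjS: "adj_sq S12_V S12_sig x y = sum_list (map (\<lambda>w. S12_sig x w * S12_sig w y) L12)"
  unfolding adj_sq_def S12_V_L by (simp add: sum_set_list L12_dist)

lemma S12_sig_simp: "S12_sig (a,b) (c,d) = (if (a \<in> {1..4} \<and> b \<in> {1..3}) \<and> (c \<in> {1..4} \<and> d \<in> {1..3}) then
     (if b = d \<and> a \<noteq> c then 1 else if a = c \<and> b \<noteq> d then -1 else 0) else 0)"
  by (simp add: S12_sig_def S12_V_def)

lemma S12_adj: "\<forall>i\<in>S12_V. \<forall>j\<in>S12_V. adj_sq S12_V S12_sig i j =
   (if i = j then 5 else if S12_sig i j = 1 then 2 else if S12_sig i j = -1 then 1 else -2)"
  unfolding adjS unfolding S12_V_L by (simp add: L12_def S12_sig_simp)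

lemma S12_sym: "S12_sig u v = S12_sig v u"
proof -
  have "(u \<in> S12_V \<and> v \<in> S12_V) = (v \<in> S12_V \<and> u \<in> S12_V)" by blast
  moreover have "(snd u = snd v \<and> fst u \<noteq> fst v) = (snd v = snd u \<and> fst v \<noteq> fst u)" by auto
  moreover have "(fst u = fst v \<and> snd u \<noteq> snd v) = (fst v = fst u \<and> snd v \<noteq> snd u)" by auto
  ultimately show ?thesis unfolding S12_sig_def by presburger
qed

lemma S12_supp: "S12_sig u v \<noteq> 0 \<Longrightarrow> u \<in> S12_V \<and> v \<in> S12_V"
proof (rule ccontr)
  assume "\<not> (u \<in> S12_V \<and> v \<in> S12_V)" "S12_sig u v \<noteq> 0"
  moreover have "\<not> (u \<in> S12_V \<and> v \<in> S12_V) \<Longrightarrow> S12_sig u v = 0"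
    unfolding S12_sig_def by (rule if_not_P)
  ultimately show False by blast
qed

lemma S12_sg: "signed_graph S12_V S12_sig"
  unfolding signed_graph_def
proof (intro conjI allI impI)
  show "finite S12_V" by (simp add: S12_V_L)
  fix u v
  show "S12_sig u v \<in> {-1,0,1}" by (simp add: S12_sig_def)
  show "S12_sig u v = S12_sig v u" by (rule S12_sym)
  show "S12_sig u u = 0" by (simp add: S12_sig_def)
  assume h: "S12_sig u v \<noteq> 0"
  show "u \<in> S12_V" using S12_supp[OF h] by blast
  show "v \<in> S12_V" using S12_supp[OF h] by blast
qed

lemma S12_card: "card S12_V = 12"
  unfolding S12_V_L by (simp add: L12_def)

lemma S12_diag: "S12_sig u u = 0" by (simp add: S12_sig_def)

lemma S12_conds: "srsg_conds S12_V S12_sig 5 2 1 (-2)"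
  unfolding srsg_conds_def using S12_adj by (auto simp: S12_diag)

lemma S12_not_complete: "\<not> sg_complete S12_V S12_sig"
proof -
  have "S12_sig (1,1) (2,2) = 0" by (simp add: S12_sig_simp)
  moreover have "(1::nat,1::nat) \<in> S12_V" "(2::nat,2::nat) \<in> S12_V" by (simp_all add: S12_V_def)
  ultimately show ?thesis unfolding sg_complete_def by force
qed

lemma S12_SRSG: "SRSG S12_V S12_sig"
  unfolding SRSG_def sg_edgeless_def
proof (intro conjI)
  show "signed_graph S12_V S12_sig" by (rule S12_sg)
  show "\<not> (sg_complete S12_V S12_sig \<and> sg_homogeneous S12_V S12_sig)" using S12_not_complete by blast
  show "\<not> (\<forall>u\<in>S12_V. \<forall>v\<in>S12_V. S12_sig u v = 0)"
  proof -
    have "S12_sig (1,1) (2,1) = 1" by (simp add: S12_sig_simp)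
    moreover have "(1::nat,1::nat) \<in> S12_V" "(2::nat,1::nat) \<in> S12_V" by (simp_all add: S12_V_def)
    ultimately show ?thesis by force
  qed
  show "\<exists>r a b c. srsg_conds S12_V S12_sig r a b c" using S12_conds by blast
qed

lemma S12_params: "srsg_params S12_V S12_sig 12 5 2 1 (-2)"
  unfolding srsg_params_def using S12_SRSG S12_not_complete S12_card S12_conds by blast

lemma S12_regular: "sg_regular S12_V S12_sig 5"
  unfolding sg_regular_def sg_degree_def S12_V_L
  by (simp add: card_filter_list L12_dist) (simp add: L12_def S12_sig_simp)

lemma S12_net: "net_regular S12_V S12_sig 1"
  unfolding net_regular_def net_degree_def S12_V_L
  by (simp add: card_filter_list L12_dist) (simp add: L12_def S12_sig_simp)

lemma S12_connected: "sg_connected S12_V S12_sig"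
  unfolding sg_connected_def
proof (intro conjI ballI)
  show "S12_V \<noteq> {}" by (simp add: S12_V_def)
  have step: "(\<lambda>x y. S12_sig x y \<noteq> 0)\<^sup>*\<^sup>* x y"
    if "x \<in> S12_V" "y \<in> S12_V" "fst x = fst y \<or> snd x = snd y" for x y
  proof (cases "x = y")
    case False
    then have "S12_sig x y \<noteq> 0" using that unfolding S12_sig_def by (auto simp: prod_eq_iff)
    then show ?thesis by auto
  qed auto
  fix u v assume u: "u \<in> S12_V" and v: "v \<in> S12_V"
  have m: "(fst u, snd v) \<in> S12_V" using u v by (auto simp: S12_V_def)
  show "(\<lambda>x y. S12_sig x y \<noteq> 0)\<^sup>*\<^sup>* u v"
    using step[OF u m] step[OF m v] by (auto intro: rtranclp_trans)
qed

lemma not_iso_G2_S12: "\<not> sg_iso G2_V G2_sig S12_V S12_sig"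
  unfolding sg_iso_def using bij_betw_same_card G2_card S12_card by fastforce


definition pos :: "int \<Rightarrow> int" where "pos t = (if t = 1 then 1 else 0)"
definition neg :: "int \<Rightarrow> int" where "neg t = (if t = -1 then 1 else 0)"

lemma card_inter_list: "distinct xs \<Longrightarrow> int (card (A \<inter> set xs)) = (\<Sum>y\<leftarrow>xs. if y \<in> A then 1 else 0)"
proof (induction xs)
  case (Cons x xs)
  have "A \<inter> set (x # xs) = (if x \<in> A then insert x (A \<inter> set xs) else A \<inter> set xs)" by auto
  then show ?case using Cons by auto
qed simp

lemma local_class:
  fixes x12 x13 x23 y11 y12 y21 y22 y31 y32 z a b :: int
  assumes r: "\<bar>x12\<bar> \<le> 1" "\<bar>x13\<bar> \<le> 1" "\<bar>x23\<bar> \<le> 1" "\<bar>y11\<bar> \<le> 1" "\<bar>y12\<bar> \<le> 1"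
     "\<bar>y21\<bar> \<le> 1" "\<bar>y22\<bar> \<le> 1" "\<bar>y31\<bar> \<le> 1" "\<bar>y32\<bar> \<le> 1" "\<bar>z\<bar> \<le> 1"
  and d: "1+pos x12+pos x13+pos y11+pos y12 \<le> 3" "neg x12+neg x13+neg y11+neg y12 \<le> 2"
    "1+pos x12+pos x23+pos y21+pos y22 \<le> 3" "neg x12+neg x23+neg y21+neg y22 \<le> 2"
    "1+pos x13+pos x23+pos y31+pos y32 \<le> 3" "neg x13+neg x23+neg y31+neg y32 \<le> 2"
    "pos y11+pos y21+pos y31+pos z \<le> 3" "1+neg y11+neg y21+neg y31+neg z \<le> 2"
    "pos y12+pos y22+pos y32+pos z \<le> 3" "1+neg y12+neg y22+neg y32+neg z \<le> 2"
  and v: "a = x12+x13-y11-y12" "a = x12+x23-y21-y22" "a = x13+x23-y31-y32"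
    "b = y11+y21+y31-z" "b = y12+y22+y32-z"
  and c: "neg x12+neg x13 = pos y11+pos y12" "neg x12+neg x23 = pos y21+pos y22"
     "neg x13+neg x23 = pos y31+pos y32" "neg y11+neg y21+neg y31 = pos z" "neg y12+neg y22+neg y32 = pos z"
  shows "a = -4
   \<or> (a = 0 \<and> b = 0 \<and> x12 = 0 \<and> x13 = 0 \<and> x23 = 0 \<and> y11 = 0 \<and> y12 = 0 \<and> y21 = 0 \<and> y22 = 0 \<and> y31 = 0 \<and> y32 = 0 \<and> z = 0)
   \<or> (a = 0 \<and> b = 1 \<and> x12 = 0 \<and> x13 = 0 \<and> x23 = 0 \<and> y11 = 0 \<and> y12 = 0 \<and> y21 = 0 \<and> y22 = 0 \<and> y31 = 0 \<and> y32 = 0 \<and> z = -1)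
   \<or> (a = 2 \<and> b = 0 \<and> x12 = 1 \<and> x13 = 1 \<and> x23 = 1 \<and> y11 = 0 \<and> y12 = 0 \<and> y21 = 0 \<and> y22 = 0 \<and> y31 = 0 \<and> y32 = 0 \<and> z = 0)
   \<or> (a = 2 \<and> b = 1 \<and> x12 = 1 \<and> x13 = 1 \<and> x23 = 1 \<and> y11 = 0 \<and> y12 = 0 \<and> y21 = 0 \<and> y22 = 0 \<and> y31 = 0 \<and> y32 = 0 \<and> z = -1)
   \<or> (a = 2 \<and> b = -2 \<and> ((x12 = 1 \<and> x13 = 1 \<and> x23 = 0) \<or> (x12 = 1 \<and> x23 = 1 \<and> x13 = 0) \<or> (x13 = 1 \<and> x23 = 1 \<and> x12 = 0)))"
  using r d v c unfolding pos_def neg_def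
  supply [[smt_timeout=600]] by (smt (z3))

lemma local_complete:
  fixes x12 x13 x23 y11 y12 y21 y22 y31 y32 z a b :: int
  assumes r: "\<bar>x12\<bar> = 1" "\<bar>x13\<bar> = 1" "\<bar>x23\<bar> = 1" "\<bar>y11\<bar> = 1" "\<bar>y12\<bar> = 1"
     "\<bar>y21\<bar> = 1" "\<bar>y22\<bar> = 1" "\<bar>y31\<bar> = 1" "\<bar>y32\<bar> = 1" "\<bar>z\<bar> = 1"
  and d: "1+pos x12+pos x13+pos y11+pos y12 \<le> 3" "neg x12+neg x13+neg y11+neg y12 \<le> 2"
    "1+pos x12+pos x23+pos y21+pos y22 \<le> 3" "neg x12+neg x23+neg y21+neg y22 \<le> 2"
    "1+pos x13+pos x23+pos y31+pos y32 \<le> 3" "neg x13+neg x23+neg y31+neg y32 \<le> 2"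
    "pos y11+pos y21+pos y31+pos z \<le> 3" "1+neg y11+neg y21+neg y31+neg z \<le> 2"
    "pos y12+pos y22+pos y32+pos z \<le> 3" "1+neg y12+neg y22+neg y32+neg z \<le> 2"
  and v: "a = x12+x13-y11-y12" "a = x12+x23-y21-y22" "a = x13+x23-y31-y32"
    "b = y11+y21+y31-z" "b = y12+y22+y32-z"
  shows "z = -1"
  using r d v unfolding pos_def neg_def
  supply [[smt_timeout=600]] by (smt (z3))

lemma local_bbound:
  fixes y11 y21 y31 z b :: int
  assumes r: "\<bar>y11\<bar> \<le> 1" "\<bar>y21\<bar> \<le> 1" "\<bar>y31\<bar> \<le> 1" "\<bar>z\<bar> \<le> 1"
  and d: "1+neg y11+neg y21+neg y31+neg z \<le> 2"
  and v: "b = y11+y21+y31-z"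
  shows "b \<ge> -2"
  using r d v unfolding pos_def neg_def by (smt (z3))

locale srsg5 =
  fixes V :: "'a set" and s :: "'a \<Rightarrow> 'a \<Rightarrow> int" and a b c :: int
  assumes sg: "signed_graph V s" and cond: "srsg_conds V s 5 a b c"
    and reg: "sg_regular V s 5" and net: "net_regular V s 1"
begin

lemma fin: "finite V" using sg unfolding signed_graph_def by blast
lemma vals: "s x y = 1 \<or> s x y = 0 \<or> s x y = -1" using sg unfolding signed_graph_def by blast
lemma sym: "s x y = s y x" using sg unfolding signed_graph_def by blast
lemma diag[simp]: "s x x = 0" using sg unfolding signed_graph_def by blast
lemma supp: "s x y \<noteq> 0 \<Longrightarrow> x \<in> V \<and> y \<in> V" using sg unfolding signed_graph_def by blast
lemma supp1: "s x y = 1 \<Longrightarrow> x \<in> V \<and> y \<in> V" using supp[of x y] by simp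
lemma suppm: "s x y = -1 \<Longrightarrow> x \<in> V \<and> y \<in> V" using supp[of x y] by simp

definition "Pos x = {y. s x y = 1}"
definition "Neg x = {y. s x y = -1}"
definition "Nb x = {y. s x y \<noteq> 0}"

lemma Pos_sub: "Pos x \<subseteq> V" unfolding Pos_def using supp1 by blast
lemma Neg_sub: "Neg x \<subseteq> V" unfolding Neg_def using suppm by blast
lemma Nb_sub: "Nb x \<subseteq> V" unfolding Nb_def using supp by fastforce
lemma Nb_eq: "Nb x = Pos x \<union> Neg x" unfolding Nb_def Pos_def Neg_def using vals by fastforce
lemma PN_disj: "Pos x \<inter> Neg x = {}" unfolding Pos_def Neg_def by auto
lemma fin_Pos: "finite (Pos x)" using Pos_sub fin finite_subset by blast
lemma fin_Neg: "finite (Neg x)" using Neg_sub fin finite_subset by blast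
lemma fin_Nb: "finite (Nb x)" using Nb_sub fin finite_subset by blast

lemma card_Nb: "x \<in> V \<Longrightarrow> card (Nb x) = 5"
proof -
  assume "x \<in> V"
  then have "sg_degree V s x = 5" using reg unfolding sg_regular_def by blast
  moreover have "{w\<in>V. s x w \<noteq> 0} = Nb x" unfolding Nb_def using supp by blast
  ultimately show ?thesis unfolding sg_degree_def by simp
qed

lemma card_PN: "x \<in> V \<Longrightarrow> card (Pos x) = 3 \<and> card (Neg x) = 2"
proof -
  assume x: "x \<in> V"
  then have "net_degree V s x = 1" using net unfolding net_regular_def by blast
  moreover have "{w\<in>V. s x w = 1} = Pos x" unfolding Pos_def using supp1 by blast
  moreover have "{w\<in>V. s x w = -1} = Neg x" unfolding Neg_def using suppm by blast
  ultimately have 1: "int (card (Pos x)) - int (card (Neg x)) = 1" unfolding net_degree_def by simp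
  have "card (Nb x) = card (Pos x) + card (Neg x)"
    unfolding Nb_eq by (rule card_Un_disjoint[OF fin_Pos fin_Neg PN_disj])
  with card_Nb[OF x] 1 show ?thesis by linarith
qed

definition lab where "lab x p1 p2 p3 q1 q2 \<longleftrightarrow> Pos x = {p1,p2,p3} \<and> Neg x = {q1,q2} \<and> distinct [x,p1,p2,p3,q1,q2]"

lemma lab_ex: "x \<in> V \<Longrightarrow> \<exists>p1 p2 p3 q1 q2. lab x p1 p2 p3 q1 q2"
proof -
  assume x: "x \<in> V"
  obtain p1 p2 p3 where P: "Pos x = {p1,p2,p3}" "p1 \<noteq> p2" "p2 \<noteq> p3" "p1 \<noteq> p3"
    using card_PN[OF x] card_3_iff by metis
  obtain q1 q2 where Q: "Neg x = {q1,q2}" "q1 \<noteq> q2"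
    using card_PN[OF x] card_2_iff by metis
  have "x \<notin> Pos x" "x \<notin> Neg x" unfolding Pos_def Neg_def by auto
  then have "distinct [x,p1,p2,p3,q1,q2]" using P Q PN_disj[of x] by auto
  then show ?thesis using P Q unfolding lab_def by blast
qed

lemma lab_s:
  assumes "lab x p1 p2 p3 q1 q2"
  shows "s x p1 = 1" "s x p2 = 1" "s x p3 = 1" "s x q1 = -1" "s x q2 = -1"
    "s p1 x = 1" "s p2 x = 1" "s p3 x = 1" "s q1 x = -1" "s q2 x = -1"
    "\<And>w. s x w = 1 \<longleftrightarrow> w = p1 \<or> w = p2 \<or> w = p3"
    "\<And>w. s x w = -1 \<longleftrightarrow> w = q1 \<or> w = q2"
    "\<And>w. s x w = 0 \<longleftrightarrow> w \<notin> {p1,p2,p3,q1,q2}"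
    "distinct [x,p1,p2,p3,q1,q2]"
proof -
  have P: "Pos x = {p1,p2,p3}" and Q: "Neg x = {q1,q2}" and D: "distinct [x,p1,p2,p3,q1,q2]"
    using assms unfolding lab_def by auto
  show pp: "\<And>w. s x w = 1 \<longleftrightarrow> w = p1 \<or> w = p2 \<or> w = p3" using P unfolding Pos_def by blast
  show qq: "\<And>w. s x w = -1 \<longleftrightarrow> w = q1 \<or> w = q2" using Q unfolding Neg_def by blast
  show "\<And>w. s x w = 0 \<longleftrightarrow> w \<notin> {p1,p2,p3,q1,q2}" using pp qq vals by (smt (verit) insert_iff empty_iff)
  show "s x p1 = 1" "s x p2 = 1" "s x p3 = 1" "s x q1 = -1" "s x q2 = -1" using pp qq by auto
  then show "s p1 x = 1" "s p2 x = 1" "s p3 x = 1" "s q1 x = -1" "s q2 x = -1" using sym by metis+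
  show "distinct [x,p1,p2,p3,q1,q2]" by (rule D)
qed

lemma lab_V:
  assumes "lab x p1 p2 p3 q1 q2"
  shows "x \<in> V" "p1 \<in> V" "p2 \<in> V" "p3 \<in> V" "q1 \<in> V" "q2 \<in> V"
  using lab_s[OF assms] supp by (metis zero_neq_one zero_neq_neg_one)+

lemma sum_pos: "(\<Sum>w\<in>V. pos (s x w) * f w) = (\<Sum>w\<in>Pos x. f w)"
proof -
  have "(\<Sum>w\<in>V. pos (s x w) * f w) = (\<Sum>w\<in>V. if s x w = 1 then f w else 0)"
    by (rule sum.cong) (auto simp: pos_def)
  also have "\<dots> = (\<Sum>w\<in>{w\<in>V. s x w = 1}. f w)" by (rule sum.inter_filter[symmetric, OF fin])
  also have "{w\<in>V. s x w = 1} = Pos x" unfolding Pos_def using supp1 by blast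
  finally show ?thesis .
qed

lemma sum_neg: "(\<Sum>w\<in>V. neg (s x w) * f w) = (\<Sum>w\<in>Neg x. f w)"
proof -
  have "(\<Sum>w\<in>V. neg (s x w) * f w) = (\<Sum>w\<in>V. if s x w = -1 then f w else 0)"
    by (rule sum.cong) (auto simp: neg_def)
  also have "\<dots> = (\<Sum>w\<in>{w\<in>V. s x w = -1}. f w)" by (rule sum.inter_filter[symmetric, OF fin])
  also have "{w\<in>V. s x w = -1} = Neg x" unfolding Neg_def using suppm by blast
  finally show ?thesis .
qed

lemma s_pn: "s x y = pos (s x y) - neg (s x y)"
  using vals[of x y] by (auto simp: pos_def neg_def)

lemma sum_s: "(\<Sum>w\<in>V. s x w * f w) = (\<Sum>w\<in>Pos x. f w) - (\<Sum>w\<in>Neg x. f w)"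
proof -
  have pt: "s x w * f w = pos (s x w) * f w - neg (s x w) * f w" for w
    by (subst s_pn) (simp add: left_diff_distrib)
  have "(\<Sum>w\<in>V. s x w * f w) = (\<Sum>w\<in>V. pos (s x w) * f w - neg (s x w) * f w)"
    using pt by simp
  then show ?thesis by (simp add: sum_subtractf sum_pos sum_neg)
qed

lemma sum_lab3:
  assumes "distinct [p1,p2,p3]" shows "(\<Sum>w\<in>{p1,p2,p3}. f w) = f p1 + f p2 + f p3"
  using assms by (simp add: add.assoc)

lemma sum_lab:
  assumes "lab x p1 p2 p3 q1 q2"
  shows "(\<Sum>w\<in>V. s x w * f w) = f p1 + f p2 + f p3 - f q1 - f q2"
proof -
  have P: "Pos x = {p1,p2,p3}" and Q: "Neg x = {q1,q2}" and D: "distinct [x,p1,p2,p3,q1,q2]"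
    using assms unfolding lab_def by auto
  show ?thesis unfolding sum_s P Q using D by simp
qed

lemma adj_lab:
  assumes "lab x p1 p2 p3 q1 q2"
  shows "adj_sq V s x u = s p1 u + s p2 u + s p3 u - s q1 u - s q2 u"
  unfolding adj_sq_def by (rule sum_lab[OF assms])

lemma adj_val: "x \<in> V \<Longrightarrow> u \<in> V \<Longrightarrow> adj_sq V s x u = (if x = u then 5 else if s x u = 1 then a else if s x u = -1 then b else c)"
  using cond vals[of x u] unfolding srsg_conds_def by auto

lemma adj_val2: "x \<in> V \<Longrightarrow> u \<in> V \<Longrightarrow>
   adj_sq V s x u = c + (5 - c) * (if x = u then 1 else 0) + (a - c) * pos (s x u) + (b - c) * neg (s x u)"
  using vals[of x u] by (auto simp: adj_val pos_def neg_def)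

lemma netsum: "x \<in> V \<Longrightarrow> (\<Sum>u\<in>V. s x u) = 1"
proof -
  assume x: "x \<in> V"
  have "(\<Sum>u\<in>V. s x u) = (\<Sum>u\<in>V. s x u * 1)" by simp
  also have "\<dots> = int (card (Pos x)) - int (card (Neg x))" unfolding sum_s by simp
  finally show ?thesis using card_PN[OF x] by simp
qed

lemma netsum': "u \<in> V \<Longrightarrow> (\<Sum>w\<in>V. s w u) = 1"
  using netsum by (simp add: sym[of _ u])

lemma row: "x \<in> V \<Longrightarrow> 3*a + 2*b + c*(int (card V) - 6) = -4"
proof -
  assume x: "x \<in> V"
  have "(\<Sum>u\<in>V. adj_sq V s x u) = (\<Sum>u\<in>V. \<Sum>w\<in>V. s x w * s w u)" unfolding adj_sq_def ..
  also have "\<dots> = (\<Sum>w\<in>V. \<Sum>u\<in>V. s x w * s w u)" by (rule sum.swap)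
  also have "\<dots> = (\<Sum>w\<in>V. s x w * (\<Sum>u\<in>V. s w u))" by (simp add: sum_distrib_left)
  also have "\<dots> = (\<Sum>w\<in>V. s x w)" by (rule sum.cong) (simp_all add: netsum)
  also have "\<dots> = 1" using netsum[OF x] .
  finally have 1: "(\<Sum>u\<in>V. adj_sq V s x u) = 1" .
  have "(\<Sum>u\<in>V. adj_sq V s x u) = (\<Sum>u\<in>V. c + (5 - c) * (if x = u then 1 else 0) + (a - c) * pos (s x u) + (b - c) * neg (s x u))"
    by (rule sum.cong) (simp_all add: adj_val2 x)
  also have "\<dots> = c * int (card V) + (5 - c) + (a - c) * (\<Sum>u\<in>V. pos (s x u) * 1) + (b - c) * (\<Sum>u\<in>V. neg (s x u) * 1)"
    by (simp add: sum.distrib sum_distrib_left[symmetric] x fin)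
  also have "\<dots> = c * int (card V) + (5 - c) + (a - c) * 3 + (b - c) * 2"
    unfolding sum_pos sum_neg using card_PN[OF x] by simp
  finally show ?thesis using 1 by (simp add: algebra_simps)
qed

lemma triple: "(\<Sum>w\<in>V. s x w * adj_sq V s w u) = (\<Sum>w\<in>V. adj_sq V s x w * s w u)"
proof -
  have "(\<Sum>w\<in>V. s x w * adj_sq V s w u) = (\<Sum>w\<in>V. \<Sum>y\<in>V. s x w * s w y * s y u)"
    unfolding adj_sq_def by (simp add: sum_distrib_left mult.assoc)
  also have "\<dots> = (\<Sum>y\<in>V. \<Sum>w\<in>V. s x w * s w y * s y u)" by (rule sum.swap)
  also have "\<dots> = (\<Sum>w\<in>V. adj_sq V s x w * s w u)"
    unfolding adj_sq_def by (simp add: sum_distrib_right)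
  finally show ?thesis .
qed

lemma comm_gen: "x \<in> V \<Longrightarrow> u \<in> V \<Longrightarrow>
   (a + b - 2*c) * ((\<Sum>w\<in>Pos x. neg (s w u)) - (\<Sum>w\<in>Neg x. pos (s w u))) = 0"
proof -
  assume x: "x \<in> V" and u: "u \<in> V"
  define A1 where "A1 = (\<Sum>w\<in>Pos x. pos (s w u))"
  define A2 where "A2 = (\<Sum>w\<in>Neg x. pos (s w u))"
  define B1 where "B1 = (\<Sum>w\<in>Pos x. neg (s w u))"
  define B2 where "B2 = (\<Sum>w\<in>Neg x. neg (s w u))"
  have "(\<Sum>w\<in>V. s x w * adj_sq V s w u) =
        (\<Sum>w\<in>V. s x w * (c + (5 - c) * (if w = u then 1 else 0) + (a - c) * pos (s w u) + (b - c) * neg (s w u)))"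
    by (rule sum.cong) (simp_all add: adj_val2 u)
  also have "\<dots> = (\<Sum>w\<in>V. c * s x w + (5 - c) * (s x w * (if w = u then 1 else 0))
        + (a - c) * (s x w * pos (s w u)) + (b - c) * (s x w * neg (s w u)))"
    by (rule sum.cong) (simp_all add: algebra_simps)
  also have "\<dots> = c * (\<Sum>w\<in>V. s x w) + (5 - c) * (\<Sum>w\<in>V. s x w * (if w = u then 1 else 0))
        + (a - c) * (\<Sum>w\<in>V. s x w * pos (s w u)) + (b - c) * (\<Sum>w\<in>V. s x w * neg (s w u))"
    by (simp add: sum.distrib sum_distrib_left)
  also have "\<dots> = c + (5 - c) * s x u + (a - c) * (A1 - A2) + (b - c) * (B1 - B2)"
    unfolding sum_s A1_def A2_def B1_def B2_def using netsum[OF x] u fin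
    by (simp add: sum.delta'[symmetric] sum_s[symmetric] if_distrib cong: if_cong)
  finally have S1: "(\<Sum>w\<in>V. s x w * adj_sq V s w u) = c + (5 - c) * s x u + (a - c) * (A1 - A2) + (b - c) * (B1 - B2)" .
  have "(\<Sum>w\<in>V. adj_sq V s x w * s w u) =
        (\<Sum>w\<in>V. (c + (5 - c) * (if x = w then 1 else 0) + (a - c) * pos (s x w) + (b - c) * neg (s x w)) * s w u)"
    by (rule sum.cong) (simp_all add: adj_val2 x)
  also have "\<dots> = (\<Sum>w\<in>V. c * s w u + (5 - c) * ((if x = w then 1 else 0) * s w u)
        + (a - c) * (pos (s x w) * s w u) + (b - c) * (neg (s x w) * s w u))"
    by (rule sum.cong) (simp_all add: algebra_simps)
  also have "\<dots> = c * (\<Sum>w\<in>V. s w u) + (5 - c) * (\<Sum>w\<in>V. (if x = w then 1 else 0) * s w u)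
        + (a - c) * (\<Sum>w\<in>V. pos (s x w) * s w u) + (b - c) * (\<Sum>w\<in>V. neg (s x w) * s w u)"
    by (simp add: sum.distrib sum_distrib_left)
  also have "\<dots> = c + (5 - c) * s x u + (a - c) * (A1 - B1) + (b - c) * (A2 - B2)"
  proof -
    have "(\<Sum>w\<in>V. (if x = w then 1 else 0) * s w u) = (\<Sum>w\<in>V. if x = w then s w u else 0)"
      by (rule sum.cong) auto
    then have e1: "(\<Sum>w\<in>V. (if x = w then 1 else 0) * s w u) = s x u" using x fin by (simp add: sum.delta)
    have e2: "(\<Sum>w\<in>V. pos (s x w) * s w u) = A1 - B1"
      unfolding sum_pos A1_def B1_def by (subst s_pn) (simp add: sum_subtractf)
    have e3: "(\<Sum>w\<in>V. neg (s x w) * s w u) = A2 - B2"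
      unfolding sum_neg A2_def B2_def by (subst s_pn) (simp add: sum_subtractf)
    show ?thesis using e1 e2 e3 netsum'[OF u] by simp
  qed
  finally have S2: "(\<Sum>w\<in>V. adj_sq V s x w * s w u) = c + (5 - c) * s x u + (a - c) * (A1 - B1) + (b - c) * (A2 - B2)" .
  from triple[of x u] S1 S2 have "(a - c) * (A1 - A2) + (b - c) * (B1 - B2) = (a - c) * (A1 - B1) + (b - c) * (A2 - B2)" by simp
  then have "(a + b - 2*c) * (B1 - A2) = 0" by (simp add: algebra_simps)
  then show ?thesis unfolding A2_def B1_def .
qed


lemma abs_s: "\<bar>s x y\<bar> \<le> 1" using vals[of x y] by auto

lemma list_pos: "(\<Sum>z\<leftarrow>xs. pos (s y z)) = (\<Sum>z\<leftarrow>xs. if z \<in> Pos y then 1 else 0)"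
  by (induction xs) (auto simp: pos_def Pos_def)
lemma list_neg: "(\<Sum>z\<leftarrow>xs. neg (s y z)) = (\<Sum>z\<leftarrow>xs. if z \<in> Neg y then 1 else 0)"
  by (induction xs) (auto simp: neg_def Neg_def)

lemma deg_bound:
  assumes "y \<in> V" "distinct xs"
  shows "(\<Sum>z\<leftarrow>xs. pos (s y z)) \<le> 3" "(\<Sum>z\<leftarrow>xs. neg (s y z)) \<le> 2"
proof -
  have "card (Pos y \<inter> set xs) \<le> card (Pos y)" by (rule card_mono[OF fin_Pos]) auto
  then show "(\<Sum>z\<leftarrow>xs. pos (s y z)) \<le> 3" using card_PN[OF assms(1)] card_inter_list[OF assms(2), of "Pos y"]
    unfolding list_pos by linarith
  have "card (Neg y \<inter> set xs) \<le> card (Neg y)" by (rule card_mono[OF fin_Neg]) auto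
  then show "(\<Sum>z\<leftarrow>xs. neg (s y z)) \<le> 2" using card_PN[OF assms(1)] card_inter_list[OF assms(2), of "Neg y"]
    unfolding list_neg by linarith
qed

lemma local_data:
  assumes L: "lab x p1 p2 p3 q1 q2"
  shows "1+pos (s p1 p2)+pos (s p1 p3)+pos (s p1 q1)+pos (s p1 q2) \<le> 3"
    "neg (s p1 p2)+neg (s p1 p3)+neg (s p1 q1)+neg (s p1 q2) \<le> 2"
    "1+pos (s p1 p2)+pos (s p2 p3)+pos (s p2 q1)+pos (s p2 q2) \<le> 3"
    "neg (s p1 p2)+neg (s p2 p3)+neg (s p2 q1)+neg (s p2 q2) \<le> 2"
    "1+pos (s p1 p3)+pos (s p2 p3)+pos (s p3 q1)+pos (s p3 q2) \<le> 3"
    "neg (s p1 p3)+neg (s p2 p3)+neg (s p3 q1)+neg (s p3 q2) \<le> 2"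
    "pos (s p1 q1)+pos (s p2 q1)+pos (s p3 q1)+pos (s q1 q2) \<le> 3"
    "1+neg (s p1 q1)+neg (s p2 q1)+neg (s p3 q1)+neg (s q1 q2) \<le> 2"
    "pos (s p1 q2)+pos (s p2 q2)+pos (s p3 q2)+pos (s q1 q2) \<le> 3"
    "1+neg (s p1 q2)+neg (s p2 q2)+neg (s p3 q2)+neg (s q1 q2) \<le> 2"
    "a = s p1 p2 + s p1 p3 - s p1 q1 - s p1 q2"
    "a = s p1 p2 + s p2 p3 - s p2 q1 - s p2 q2"
    "a = s p1 p3 + s p2 p3 - s p3 q1 - s p3 q2"
    "b = s p1 q1 + s p2 q1 + s p3 q1 - s q1 q2"
    "b = s p1 q2 + s p2 q2 + s p3 q2 - s q1 q2"
proof -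
  note ls = lab_s[OF L] and lv = lab_V[OF L]
  have D: "distinct [x,p1,p2,p3,q1,q2]" by (rule ls(14))
  have S: "s p2 p1 = s p1 p2" "s p3 p1 = s p1 p3" "s p3 p2 = s p2 p3" "s q1 p1 = s p1 q1" "s q2 p1 = s p1 q2"
    "s q1 p2 = s p2 q1" "s q2 p2 = s p2 q2" "s q1 p3 = s p3 q1" "s q2 p3 = s p3 q2" "s q2 q1 = s q1 q2"
    by (simp_all add: sym)
  have P1: "pos (s p1 x) = 1" "pos (s p2 x) = 1" "pos (s p3 x) = 1" using ls by (simp_all add: pos_def)
  have N1: "neg (s q1 x) = 1" "neg (s q2 x) = 1" using ls by (simp_all add: neg_def)
  have "distinct [x,p2,p3,q1,q2]" "distinct [x,p1,p3,q1,q2]" "distinct [x,p1,p2,q1,q2]"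
     "distinct [x,p1,p2,p3,q2]" "distinct [x,p1,p2,p3,q1]" using D by auto
  note db = deg_bound[OF lv(2) this(1)] deg_bound[OF lv(3) this(2)] deg_bound[OF lv(4) this(3)]
     deg_bound[OF lv(5) this(4)] deg_bound[OF lv(6) this(5)]
  show "1+pos (s p1 p2)+pos (s p1 p3)+pos (s p1 q1)+pos (s p1 q2) \<le> 3"
    "neg (s p1 p2)+neg (s p1 p3)+neg (s p1 q1)+neg (s p1 q2) \<le> 2"
    "1+pos (s p1 p2)+pos (s p2 p3)+pos (s p2 q1)+pos (s p2 q2) \<le> 3"
    "neg (s p1 p2)+neg (s p2 p3)+neg (s p2 q1)+neg (s p2 q2) \<le> 2"
    "1+pos (s p1 p3)+pos (s p2 p3)+pos (s p3 q1)+pos (s p3 q2) \<le> 3"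
    "neg (s p1 p3)+neg (s p2 p3)+neg (s p3 q1)+neg (s p3 q2) \<le> 2"
    "pos (s p1 q1)+pos (s p2 q1)+pos (s p3 q1)+pos (s q1 q2) \<le> 3"
    "1+neg (s p1 q1)+neg (s p2 q1)+neg (s p3 q1)+neg (s q1 q2) \<le> 2"
    "pos (s p1 q2)+pos (s p2 q2)+pos (s p3 q2)+pos (s q1 q2) \<le> 3"
    "1+neg (s p1 q2)+neg (s p2 q2)+neg (s p3 q2)+neg (s q1 q2) \<le> 2"
    using db by (simp_all add: S ls(1-10) add.assoc neg_def pos_def)
  have A: "adj_sq V s x p1 = a" "adj_sq V s x p2 = a" "adj_sq V s x p3 = a" "adj_sq V s x q1 = b" "adj_sq V s x q2 = b"
    using adj_val[OF lv(1)] lv ls by auto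
  show "a = s p1 p2 + s p1 p3 - s p1 q1 - s p1 q2"
    "a = s p1 p2 + s p2 p3 - s p2 q1 - s p2 q2"
    "a = s p1 p3 + s p2 p3 - s p3 q1 - s p3 q2"
    "b = s p1 q1 + s p2 q1 + s p3 q1 - s q1 q2"
    "b = s p1 q2 + s p2 q2 + s p3 q2 - s q1 q2"
    using A adj_lab[OF L] by (simp_all add: S)
qed

lemma local_comm:
  assumes L: "lab x p1 p2 p3 q1 q2" and ne: "a + b \<noteq> 2*c"
  shows "neg (s p1 p2)+neg (s p1 p3) = pos (s p1 q1)+pos (s p1 q2)"
    "neg (s p1 p2)+neg (s p2 p3) = pos (s p2 q1)+pos (s p2 q2)"
    "neg (s p1 p3)+neg (s p2 p3) = pos (s p3 q1)+pos (s p3 q2)"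
    "neg (s p1 q1)+neg (s p2 q1)+neg (s p3 q1) = pos (s q1 q2)"
    "neg (s p1 q2)+neg (s p2 q2)+neg (s p3 q2) = pos (s q1 q2)"
proof -
  note ls = lab_s[OF L] and lv = lab_V[OF L]
  have P: "Pos x = {p1,p2,p3}" and Q: "Neg x = {q1,q2}" using L unfolding lab_def by auto
  have D: "distinct [x,p1,p2,p3,q1,q2]" by (rule ls(14))
  have cm: "(\<Sum>w\<in>Pos x. neg (s w u)) = (\<Sum>w\<in>Neg x. pos (s w u))" if "u \<in> V" for u
    using comm_gen[OF lv(1) that] ne by simp
  have cm2: "neg (s p1 u) + neg (s p2 u) + neg (s p3 u) = pos (s q1 u) + pos (s q2 u)" if "u \<in> V" for u
    using cm[OF that] D unfolding P Q by (simp add: add.assoc)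
  have S: "s p2 p1 = s p1 p2" "s p3 p1 = s p1 p3" "s p3 p2 = s p2 p3" "s q1 p1 = s p1 q1" "s q2 p1 = s p1 q2"
    "s q1 p2 = s p2 q1" "s q2 p2 = s p2 q2" "s q1 p3 = s p3 q1" "s q2 p3 = s p3 q2" "s q2 q1 = s q1 q2"
    by (simp_all add: sym)
  show "neg (s p1 p2)+neg (s p1 p3) = pos (s p1 q1)+pos (s p1 q2)"
    "neg (s p1 p2)+neg (s p2 p3) = pos (s p2 q1)+pos (s p2 q2)"
    "neg (s p1 p3)+neg (s p2 p3) = pos (s p3 q1)+pos (s p3 q2)"
    "neg (s p1 q1)+neg (s p2 q1)+neg (s p3 q1) = pos (s q1 q2)"
    "neg (s p1 q2)+neg (s p2 q2)+neg (s p3 q2) = pos (s q1 q2)"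
    using cm2[OF lv(2)] cm2[OF lv(3)] cm2[OF lv(4)] cm2[OF lv(5)] cm2[OF lv(6)]
    by (simp_all add: S pos_def neg_def)
qed

lemma local_at:
  assumes L: "lab x p1 p2 p3 q1 q2" and ne: "a + b \<noteq> 2*c"
  shows "a = -4
   \<or> (a = 0 \<and> b = 0 \<and> s p1 p2 = 0 \<and> s p1 p3 = 0 \<and> s p2 p3 = 0 \<and> s p1 q1 = 0 \<and> s p1 q2 = 0 \<and> s p2 q1 = 0 \<and> s p2 q2 = 0 \<and> s p3 q1 = 0 \<and> s p3 q2 = 0 \<and> s q1 q2 = 0)
   \<or> (a = 0 \<and> b = 1 \<and> s p1 p2 = 0 \<and> s p1 p3 = 0 \<and> s p2 p3 = 0 \<and> s p1 q1 = 0 \<and> s p1 q2 = 0 \<and> s p2 q1 = 0 \<and> s p2 q2 = 0 \<and> s p3 q1 = 0 \<and> s p3 q2 = 0 \<and> s q1 q2 = -1)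
   \<or> (a = 2 \<and> b = 0 \<and> s p1 p2 = 1 \<and> s p1 p3 = 1 \<and> s p2 p3 = 1 \<and> s p1 q1 = 0 \<and> s p1 q2 = 0 \<and> s p2 q1 = 0 \<and> s p2 q2 = 0 \<and> s p3 q1 = 0 \<and> s p3 q2 = 0 \<and> s q1 q2 = 0)
   \<or> (a = 2 \<and> b = 1 \<and> s p1 p2 = 1 \<and> s p1 p3 = 1 \<and> s p2 p3 = 1 \<and> s p1 q1 = 0 \<and> s p1 q2 = 0 \<and> s p2 q1 = 0 \<and> s p2 q2 = 0 \<and> s p3 q1 = 0 \<and> s p3 q2 = 0 \<and> s q1 q2 = -1)
   \<or> (a = 2 \<and> b = -2 \<and> ((s p1 p2 = 1 \<and> s p1 p3 = 1 \<and> s p2 p3 = 0) \<or> (s p1 p2 = 1 \<and> s p2 p3 = 1 \<and> s p1 p3 = 0) \<or> (s p1 p3 = 1 \<and> s p2 p3 = 1 \<and> s p1 p2 = 0)))"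
  by (rule local_class[OF abs_s abs_s abs_s abs_s abs_s abs_s abs_s abs_s abs_s abs_s
        local_data[OF L] local_comm[OF L ne]])

end

lemma card3_third:
  assumes "finite A" "card A = 3" "x \<in> A" "m \<in> A"
  shows "\<exists>w\<in>A. w \<noteq> x \<and> w \<noteq> m"
proof (rule ccontr)
  assume "\<not> ?thesis"
  then have "A \<subseteq> {x, m}" by auto
  then have "card A \<le> card {x,m}" by (rule card_mono[rotated]) simp
  also have "\<dots> \<le> 2" by (simp add: card_insert_le_m1)
  finally show False using assms by simp
qed

lemma card2_other:
  assumes "card A = 2" "x \<in> A"
  shows "\<exists>w. A = {x, w} \<and> w \<noteq> x"
proof -
  obtain u v where "A = {u,v}" "u \<noteq> v" using assms(1) card_2_iff by metis
  then show ?thesis using assms(2) by auto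
qed

context srsg5 begin

lemma lab_comm_u:
  assumes L: "lab x p1 p2 p3 q1 q2" and ne: "a + b \<noteq> 2*c" and u: "u \<in> V"
  shows "neg (s p1 u) + neg (s p2 u) + neg (s p3 u) = pos (s q1 u) + pos (s q2 u)"
proof -
  note ls = lab_s[OF L] and lv = lab_V[OF L]
  have P: "Pos x = {p1,p2,p3}" and Q: "Neg x = {q1,q2}" using L unfolding lab_def by auto
  have D: "distinct [x,p1,p2,p3,q1,q2]" by (rule ls(14))
  have "(\<Sum>w\<in>Pos x. neg (s w u)) = (\<Sum>w\<in>Neg x. pos (s w u))"
    using comm_gen[OF lv(1) u] ne by simp
  then show ?thesis using D unfolding P Q by (simp add: add.assoc)
qed

lemma far:
  assumes L: "lab x p1 p2 p3 q1 q2" and u: "u \<in> V" "u \<notin> {x,p1,p2,p3,q1,q2}"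
  shows "c = s p1 u + s p2 u + s p3 u - s q1 u - s q2 u" "s x u = 0"
proof -
  note ls = lab_s[OF L] and lv = lab_V[OF L]
  show "s x u = 0" using ls(13) u by simp
  then have "adj_sq V s x u = c" using adj_val[OF lv(1) u(1)] u by auto
  then show "c = s p1 u + s p2 u + s p3 u - s q1 u - s q2 u" using adj_lab[OF L] by simp
qed

lemma Pos_eq3:
  assumes "y \<in> V" "distinct [u1,u2,u3]" "s y u1 = 1" "s y u2 = 1" "s y u3 = 1"
  shows "s y w = 1 \<longleftrightarrow> w = u1 \<or> w = u2 \<or> w = u3"
proof -
  have "{u1,u2,u3} \<subseteq> Pos y" using assms unfolding Pos_def by auto
  moreover have "card {u1,u2,u3} = card (Pos y)" using assms card_PN[OF assms(1)] by simp
  ultimately have "{u1,u2,u3} = Pos y" using card_subset_eq[OF fin_Pos] by blast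
  then show ?thesis unfolding Pos_def by blast
qed

lemma Neg_eq2:
  assumes "y \<in> V" "u1 \<noteq> u2" "s y u1 = -1" "s y u2 = -1"
  shows "s y w = -1 \<longleftrightarrow> w = u1 \<or> w = u2"
proof -
  have "{u1,u2} \<subseteq> Neg y" using assms unfolding Neg_def by auto
  moreover have "card {u1,u2} = card (Neg y)" using assms card_PN[OF assms(1)] by simp
  ultimately have "{u1,u2} = Neg y" using card_subset_eq[OF fin_Neg] by blast
  then show ?thesis unfolding Neg_def by blast
qed

lemma ex_far:
  assumes L: "lab x p1 p2 p3 q1 q2" and n: "card V \<noteq> 6"
  shows "\<exists>u\<in>V. u \<notin> {x,p1,p2,p3,q1,q2}"
proof (rule ccontr)
  note lv = lab_V[OF L]
  assume "\<not> ?thesis"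
  then have "V = {x,p1,p2,p3,q1,q2}" using lv by auto
  then have "card V = 6" using lab_s(14)[OF L] by simp
  with n show False by simp
qed

lemma card_ge6:
  assumes L: "lab x p1 p2 p3 q1 q2" shows "card V \<ge> 6"
proof -
  have "{x,p1,p2,p3,q1,q2} \<subseteq> V" using lab_V[OF L] by auto
  then have "card {x,p1,p2,p3,q1,q2} \<le> card V" by (rule card_mono[OF fin])
  then show ?thesis using lab_s(14)[OF L] by simp
qed

lemma s_cases: "s x y = 1 \<or> s x y = 0 \<or> s x y = -1" by (rule vals)

lemma path3:
  assumes ne: "a + b \<noteq> 2*c" and ab: "a = 2" "b = -2"
    and y: "s y u1 = 1" "s y u2 = 1" "s y u3 = 1" "distinct [u1,u2,u3]"
  shows "pos (s u1 u2) + pos (s u1 u3) + pos (s u2 u3) = 2"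
proof -
  have yV: "y \<in> V" using supp1 y(1) by blast
  obtain p1 p2 p3 q1 q2 where L: "lab y p1 p2 p3 q1 q2" using lab_ex[OF yV] by blast
  note ls = lab_s[OF L]
  have "(s p1 p2 = 1 \<and> s p1 p3 = 1 \<and> s p2 p3 = 0) \<or> (s p1 p2 = 1 \<and> s p2 p3 = 1 \<and> s p1 p3 = 0) \<or> (s p1 p3 = 1 \<and> s p2 p3 = 1 \<and> s p1 p2 = 0)"
    using local_at[OF L ne] ab by auto
  moreover have "u1 \<in> {p1,p2,p3}" "u2 \<in> {p1,p2,p3}" "u3 \<in> {p1,p2,p3}" using ls(11) y by auto
  moreover have "s p2 p1 = s p1 p2" "s p3 p1 = s p1 p3" "s p3 p2 = s p2 p3" by (simp_all add: sym)
  ultimately show ?thesis using y(4) by (auto simp: pos_def)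
qed

lemma kill_2m2:
  assumes ne: "a + b \<noteq> 2*c" and ab: "a = 2" "b = -2" and x: "x \<in> V"
  shows False
proof -
  obtain p1 p2 p3 q1 q2 where L: "lab x p1 p2 p3 q1 q2" using lab_ex[OF x] by blast
  note ls = lab_s[OF L]
  have "pos (s p1 p2) + pos (s p1 p3) + pos (s p2 p3) = 2" using path3[OF ne ab ls(1-3)] ls(14) by simp
  then have cs: "(s p1 p2 = 1 \<and> s p1 p3 = 1 \<and> s p2 p3 \<noteq> 1) \<or> (s p1 p2 = 1 \<and> s p2 p3 = 1 \<and> s p1 p3 \<noteq> 1) \<or> (s p1 p3 = 1 \<and> s p2 p3 = 1 \<and> s p1 p2 \<noteq> 1)"
    unfolding pos_def by (auto split: if_splits)
  have D: "distinct [x,p1,p2,p3,q1,q2]" by (rule ls(14))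
  have "\<exists>m e1 e2. {m,e1,e2} = {p1,p2,p3} \<and> distinct [m,e1,e2] \<and> s m e1 = 1 \<and> s m e2 = 1 \<and> s e1 e2 \<noteq> 1"
  proof -
    { assume h: "s p1 p2 = 1 \<and> s p1 p3 = 1 \<and> s p2 p3 \<noteq> 1"
      have ?thesis by (rule exI[of _ p1], rule exI[of _ p2], rule exI[of _ p3]) (use h D in auto) }
    moreover
    { assume h: "s p1 p2 = 1 \<and> s p2 p3 = 1 \<and> s p1 p3 \<noteq> 1"
      have "s p2 p1 = 1" using h sym by metis
      then have ?thesis by (rule_tac exI[of _ p2], rule_tac exI[of _ p1], rule_tac exI[of _ p3]) (use h D in auto) }
    moreover
    { assume h: "s p1 p3 = 1 \<and> s p2 p3 = 1 \<and> s p1 p2 \<noteq> 1"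
      have "s p3 p1 = 1" "s p3 p2 = 1" using h sym by metis+
      then have ?thesis by (rule_tac exI[of _ p3], rule_tac exI[of _ p1], rule_tac exI[of _ p2]) (use h D in auto) }
    ultimately show ?thesis using cs by blast
  qed
  then obtain m e1 e2 where me: "{m,e1,e2} = {p1,p2,p3}" "distinct [m,e1,e2]" "s m e1 = 1" "s m e2 = 1" "s e1 e2 \<noteq> 1"
    by blast
  have sxm: "s x m = 1" "s x e1 = 1" "s x e2 = 1" using ls(11) me(1) by blast+
  have e1V: "e1 \<in> V" using supp1 sxm(2) by blast
  have mV: "m \<in> V" using supp1 sxm(1) by blast
  have "x \<in> Pos e1" "m \<in> Pos e1" using sxm me sym unfolding Pos_def by auto
  then obtain w where w: "w \<in> Pos e1" "w \<noteq> x" "w \<noteq> m"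
    using card3_third[OF fin_Pos card_PN[OF e1V, THEN conjunct1]] by blast
  have we1: "w \<noteq> e1" using w(1) unfolding Pos_def by auto
  have "x \<noteq> m" using ls(14) me(1) by auto
  then have "pos (s x m) + pos (s x w) + pos (s m w) = 2"
    using path3[OF ne ab, of e1 x m w] w sxm me sym unfolding Pos_def by auto
  then have "s x w = 1 \<or> s m w = 1" using sxm unfolding pos_def by (auto split: if_splits)
  then show False
  proof
    assume "s x w = 1"
    then have "w = m \<or> w = e1 \<or> w = e2" using ls(11) me(1) by blast
    then have "w = e2" using w we1 by blast
    then show False using w(1) me(5) unfolding Pos_def by auto
  next
    assume "s m w = 1"
    moreover have "distinct [x,e1,e2]" using ls(14) me by auto
    moreover have "s m x = 1" "s m e1 = 1" "s m e2 = 1" using sxm me sym by auto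
    ultimately have "w = x \<or> w = e1 \<or> w = e2" using Pos_eq3[OF mV] by blast
    then have "w = e2" using w we1 by blast
    then show False using w(1) me(5) unfolding Pos_def by auto
  qed
qed

end

lemma cm4: "(c::int) * m = -4 \<Longrightarrow> m \<ge> 4 \<Longrightarrow> c = -1 \<and> m = 4"
proof -
  assume h: "c * m = -4" "m \<ge> 4"
  have "c < 0"
  proof (rule ccontr)
    assume "\<not> c < 0" then have "c * m \<ge> 0" using h(2) by simp
    then show False using h(1) by simp
  qed
  moreover have "c \<ge> -1"
  proof (rule ccontr)
    assume "\<not> c \<ge> -1" then have "c \<le> -2" by simp
    then have "c * m \<le> -2 * m" using h(2) by (intro mult_right_mono) auto
    then show False using h by simp
  qed
  ultimately have "c = -1" by simp
  then show ?thesis using h by simp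
qed

context srsg5 begin

lemma indep00:
  assumes ne: "a + b \<noteq> 2*c" and ab: "a = 0" "b = 0" and h: "s y u \<noteq> 0" "s y w \<noteq> 0"
  shows "s u w = 0"
proof -
  have yV: "y \<in> V" using supp h(1) by blast
  obtain p1 p2 p3 q1 q2 where L: "lab y p1 p2 p3 q1 q2" using lab_ex[OF yV] by blast
  note ls = lab_s[OF L]
  have Z: "s p1 p2 = 0" "s p1 p3 = 0" "s p2 p3 = 0" "s p1 q1 = 0" "s p1 q2 = 0" "s p2 q1 = 0"
     "s p2 q2 = 0" "s p3 q1 = 0" "s p3 q2 = 0" "s q1 q2 = 0"
    using local_at[OF L ne] ab by auto
  have "u \<in> {p1,p2,p3,q1,q2}" "w \<in> {p1,p2,p3,q1,q2}" using ls(13) h by auto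
  then show ?thesis using Z sym by auto
qed

lemma Nb_lab: "lab x p1 p2 p3 q1 q2 \<Longrightarrow> Nb x = {p1,p2,p3,q1,q2}"
  unfolding lab_def Nb_eq by auto

lemma sum_Nb: "(\<Sum>w\<in>V. s z w) = (\<Sum>w\<in>Nb z. s z w)"
  by (rule sum.mono_neutral_right[OF fin Nb_sub]) (auto simp: Nb_def)

lemma kill_00:
  assumes ne: "a + b \<noteq> 2*c" and ab: "a = 0" "b = 0" and x: "x \<in> V"
  shows False
proof -
  obtain p1 p2 p3 q1 q2 where L: "lab x p1 p2 p3 q1 q2" using lab_ex[OF x] by blast
  note ls = lab_s[OF L] and lv = lab_V[OF L]
  have D: "distinct [x,p1,p2,p3,q1,q2]" by (rule ls(14))
  have row': "c * (int (card V) - 6) = -4" using row[OF x] ab by simp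
  have disj: "Nb x \<inter> Nb p1 = {}"
  proof (rule ccontr)
    assume "Nb x \<inter> Nb p1 \<noteq> {}"
    then obtain w where "s x w \<noteq> 0" "s p1 w \<noteq> 0" unfolding Nb_def by auto
    moreover have "s x p1 \<noteq> 0" using ls by simp
    ultimately show False using indep00[OF ne ab] by blast
  qed
  have c10: "card (Nb x \<union> Nb p1) = 10"
    using card_Un_disjoint[OF fin_Nb fin_Nb disj] card_Nb[OF x] card_Nb[OF lv(2)] by simp
  have sub: "Nb x \<union> Nb p1 \<subseteq> V" using Nb_sub by blast
  then have "card V \<ge> 10" using c10 card_mono[OF fin sub] by simp
  then have "c = -1 \<and> int (card V) - 6 = 4" using cm4[OF row'] by simp
  then have cV: "c = -1" "card V = 10" by auto
  have Veq: "V = Nb x \<union> Nb p1" using card_subset_eq[OF fin sub] c10 cV by simp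
  have "card (Nb p1) = 5" using card_Nb[OF lv(2)] .
  then obtain z where z: "z \<in> Nb p1" "z \<noteq> x"
  proof -
    have "Nb p1 - {x} \<noteq> {}"
    proof
      assume "Nb p1 - {x} = {}" then have "Nb p1 \<subseteq> {x}" by blast
      then have "card (Nb p1) \<le> 1" using card_mono[of "{x}"] by fastforce
      then show False using \<open>card (Nb p1) = 5\<close> by simp
    qed
    then show ?thesis using that by blast
  qed
  have zV: "z \<in> V" using z Nb_sub by blast
  have "Nb z \<subseteq> Nb x"
  proof
    fix w assume w: "w \<in> Nb z"
    then have "w \<in> V" using Nb_sub by blast
    moreover have "w \<notin> Nb p1"
    proof
      assume "w \<in> Nb p1"
      then have "s z w = 0" using indep00[OF ne ab] z(1) unfolding Nb_def by blast
      then show False using w unfolding Nb_def by simp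
    qed
    ultimately show "w \<in> Nb x" using Veq by blast
  qed
  then have NE: "Nb z = Nb x" using card_subset_eq[OF fin_Nb] card_Nb[OF zV] card_Nb[OF x] by metis
  have zn: "z \<notin> {x,p1,p2,p3,q1,q2}"
    using z disj Nb_lab[OF L] by auto
  have cz: "c = s p1 z + s p2 z + s p3 z - s q1 z - s q2 z" using far(1)[OF L zV zn] .
  have "(\<Sum>w\<in>V. s z w) = 1" using netsum[OF zV] .
  then have "(\<Sum>w\<in>{p1,p2,p3,q1,q2}. s z w) = 1" unfolding sum_Nb NE Nb_lab[OF L] .
  then have sm: "s z p1 + s z p2 + s z p3 + s z q1 + s z q2 = 1" using D by (simp add: add.assoc)
  have nz: "s z p1 \<noteq> 0" "s z p2 \<noteq> 0" "s z p3 \<noteq> 0" "s z q1 \<noteq> 0" "s z q2 \<noteq> 0"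
    using NE Nb_lab[OF L] unfolding Nb_def by auto
  have "s p1 z = s z p1" "s p2 z = s z p2" "s p3 z = s z p3" "s q1 z = s z q1" "s q2 z = s z q2" by (simp_all add: sym)
  then show False using cz cV sm nz vals[of z q1] vals[of z q2] by auto
qed

end

context srsg5 begin

definition labvals where "labvals P N \<longleftrightarrow> (\<forall>y p1 p2 p3 q1 q2. lab y p1 p2 p3 q1 q2 \<longrightarrow>
   s p1 p2 = P \<and> s p1 p3 = P \<and> s p2 p3 = P \<and> s p1 q1 = 0 \<and> s p1 q2 = 0 \<and> s p2 q1 = 0 \<and>
   s p2 q2 = 0 \<and> s p3 q1 = 0 \<and> s p3 q2 = 0 \<and> s q1 q2 = N)"

lemma labvals_01: assumes ne: "a + b \<noteq> 2*c" and ab: "a = 0" "b = 1" shows "labvals 0 (-1)"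
  unfolding labvals_def
proof (intro allI impI)
  fix y p1 p2 p3 q1 q2 assume L: "lab y p1 p2 p3 q1 q2"
  show "s p1 p2 = 0 \<and> s p1 p3 = 0 \<and> s p2 p3 = 0 \<and> s p1 q1 = 0 \<and> s p1 q2 = 0 \<and> s p2 q1 = 0 \<and>
   s p2 q2 = 0 \<and> s p3 q1 = 0 \<and> s p3 q2 = 0 \<and> s q1 q2 = (-1)"
    using local_at[OF L ne] unfolding ab by simp
qed
lemma labvals_20: assumes ne: "a + b \<noteq> 2*c" and ab: "a = 2" "b = 0" shows "labvals 1 0"
  unfolding labvals_def
proof (intro allI impI)
  fix y p1 p2 p3 q1 q2 assume L: "lab y p1 p2 p3 q1 q2"
  show "s p1 p2 = 1 \<and> s p1 p3 = 1 \<and> s p2 p3 = 1 \<and> s p1 q1 = 0 \<and> s p1 q2 = 0 \<and> s p2 q1 = 0 \<and>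
   s p2 q2 = 0 \<and> s p3 q1 = 0 \<and> s p3 q2 = 0 \<and> s q1 q2 = 0"
    using local_at[OF L ne] unfolding ab by simp
qed
lemma labvals_21: assumes ne: "a + b \<noteq> 2*c" and ab: "a = 2" "b = 1" shows "labvals 1 (-1)"
  unfolding labvals_def
proof (intro allI impI)
  fix y p1 p2 p3 q1 q2 assume L: "lab y p1 p2 p3 q1 q2"
  show "s p1 p2 = 1 \<and> s p1 p3 = 1 \<and> s p2 p3 = 1 \<and> s p1 q1 = 0 \<and> s p1 q2 = 0 \<and> s p2 q1 = 0 \<and>
   s p2 q2 = 0 \<and> s p3 q1 = 0 \<and> s p3 q2 = 0 \<and> s q1 q2 = (-1)"
    using local_at[OF L ne] unfolding ab by simp
qed

lemma cls:
  assumes lv: "labvals P N"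
  shows "s y u = 1 \<Longrightarrow> s y w = 1 \<Longrightarrow> u \<noteq> w \<Longrightarrow> s u w = P"
    "s y u = -1 \<Longrightarrow> s y w = -1 \<Longrightarrow> u \<noteq> w \<Longrightarrow> s u w = N"
    "s y u = 1 \<Longrightarrow> s y w = -1 \<Longrightarrow> s u w = 0"
proof -
  { assume yV: "y \<in> V"
    obtain p1 p2 p3 q1 q2 where L: "lab y p1 p2 p3 q1 q2" using lab_ex[OF yV] by blast
    note ls = lab_s[OF L]
    have Z: "s p1 p2 = P" "s p1 p3 = P" "s p2 p3 = P" "s p1 q1 = 0" "s p1 q2 = 0" "s p2 q1 = 0"
       "s p2 q2 = 0" "s p3 q1 = 0" "s p3 q2 = 0" "s q1 q2 = N"
      using lv L unfolding labvals_def by blast+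
    have S: "s p2 p1 = s p1 p2" "s p3 p1 = s p1 p3" "s p3 p2 = s p2 p3" "s q1 p1 = s p1 q1" "s q2 p1 = s p1 q2"
      "s q1 p2 = s p2 q1" "s q2 p2 = s p2 q2" "s q1 p3 = s p3 q1" "s q2 p3 = s p3 q2" "s q2 q1 = s q1 q2"
      by (simp_all add: sym)
    have "s y u = 1 \<Longrightarrow> s y w = 1 \<Longrightarrow> u \<noteq> w \<Longrightarrow> s u w = P"
    proof -
      assume h: "s y u = 1" "s y w = 1" "u \<noteq> w"
      have "u = p1 \<or> u = p2 \<or> u = p3" "w = p1 \<or> w = p2 \<or> w = p3" using ls(11) h by blast+
      then show ?thesis using h(3) by (elim disjE) (simp_all add: Z S)
    qed
    moreover have "s y u = -1 \<Longrightarrow> s y w = -1 \<Longrightarrow> u \<noteq> w \<Longrightarrow> s u w = N"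
    proof -
      assume h: "s y u = -1" "s y w = -1" "u \<noteq> w"
      have "u = q1 \<or> u = q2" "w = q1 \<or> w = q2" using ls(12) h by blast+
      then show ?thesis using h(3) by (elim disjE) (simp_all add: Z S)
    qed
    moreover have "s y u = 1 \<Longrightarrow> s y w = -1 \<Longrightarrow> s u w = 0"
    proof -
      assume h: "s y u = 1" "s y w = -1"
      have "u = p1 \<or> u = p2 \<or> u = p3" "w = q1 \<or> w = q2" using ls(11,12) h by blast+
      then show ?thesis by (elim disjE) (simp_all add: Z S)
    qed
    ultimately have "(s y u = 1 \<longrightarrow> s y w = 1 \<longrightarrow> u \<noteq> w \<longrightarrow> s u w = P) \<and>
      (s y u = -1 \<longrightarrow> s y w = -1 \<longrightarrow> u \<noteq> w \<longrightarrow> s u w = N) \<and> (s y u = 1 \<longrightarrow> s y w = -1 \<longrightarrow> s u w = 0)" by blast }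
  note * = this
  show "s y u = 1 \<Longrightarrow> s y w = 1 \<Longrightarrow> u \<noteq> w \<Longrightarrow> s u w = P" using * supp1 by blast
  show "s y u = -1 \<Longrightarrow> s y w = -1 \<Longrightarrow> u \<noteq> w \<Longrightarrow> s u w = N" using * suppm by blast
  show "s y u = 1 \<Longrightarrow> s y w = -1 \<Longrightarrow> s u w = 0" using * supp1 by blast
qed

lemma far_decomp:
  assumes L: "lab x p1 p2 p3 q1 q2" and u: "u \<in> V" "u \<notin> {x,p1,p2,p3,q1,q2}"
  shows "c = (pos (s p1 u) + pos (s p2 u) + pos (s p3 u)) - (neg (s p1 u) + neg (s p2 u) + neg (s p3 u))
     - (pos (s q1 u) + pos (s q2 u)) + (neg (s q1 u) + neg (s q2 u))"
  using far(1)[OF L u] s_pn[of p1 u] s_pn[of p2 u] s_pn[of p3 u] s_pn[of q1 u] s_pn[of q2 u] by linarith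

lemma c_neg:
  assumes L: "lab x p1 p2 p3 q1 q2" and r: "c * (int (card V) - 6) = k" "k < 0"
  shows "c < 0"
proof -
  have "int (card V) - 6 \<ge> 0" using card_ge6[OF L] by simp
  then show ?thesis using r by (metis linorder_not_le mult_nonneg_nonneg mult_nonpos_nonneg)
qed

lemma pos_ex3: "pos t1 + pos t2 + pos t3 \<ge> 1 \<Longrightarrow> t1 = 1 \<or> t2 = 1 \<or> t3 = 1"
  unfolding pos_def by (auto split: if_splits)

lemma kill_01:
  assumes ne: "a + b \<noteq> 2*c" and ab: "a = 0" "b = 1" and x: "x \<in> V"
  shows False
proof -
  note C = cls[OF labvals_01[OF ne ab]]
  obtain p1 p2 p3 q1 q2 where L: "lab x p1 p2 p3 q1 q2" using lab_ex[OF x] by blast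
  note ls = lab_s[OF L] and lv = lab_V[OF L]
  have D: "distinct [x,p1,p2,p3,q1,q2]" by (rule ls(14))
  have Z: "s p1 p2 = 0" "s p1 p3 = 0" "s p2 p3 = 0" "s p1 q1 = 0" "s p1 q2 = 0" "s p2 q1 = 0"
     "s p2 q2 = 0" "s p3 q1 = 0" "s p3 q2 = 0" "s q1 q2 = -1"
    using labvals_01[OF ne ab] L unfolding labvals_def by blast+
  have S: "s p2 p1 = s p1 p2" "s p3 p1 = s p1 p3" "s p3 p2 = s p2 p3" "s q1 p1 = s p1 q1" "s q2 p1 = s p1 q2"
    "s q1 p2 = s p2 q1" "s q2 p2 = s p2 q2" "s q1 p3 = s p3 q1" "s q2 p3 = s p3 q2" "s q2 q1 = s q1 q2"
    by (simp_all add: sym)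
  have r6: "c * (int (card V) - 6) = -6" using row[OF x] ab by simp
  have cn: "c < 0" using c_neg[OF L r6] by simp
  have xq: "x \<noteq> q2" "x \<noteq> q1" using D by auto
  have z21: "s q2 q1 = -1" using Z(10) S(10) by simp
  have Nq1: "s q1 w = -1 \<longleftrightarrow> w = x \<or> w = q2" for w
    using Neg_eq2[OF lv(5) xq(1) ls(9) Z(10)] .
  have Nq2: "s q2 w = -1 \<longleftrightarrow> w = x \<or> w = q1" for w
    using Neg_eq2[OF lv(6) xq(2) ls(10) z21] .
  have F: "pos (s p1 u) + pos (s p2 u) + pos (s p3 u) = c + 2 \<and>
           neg (s p1 u) + neg (s p2 u) + neg (s p3 u) = 1 \<and> pos (s q1 u) + pos (s q2 u) = 1"
    if u: "u \<in> V" "u \<notin> {x,p1,p2,p3,q1,q2}" for u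
  proof -
    have "s q1 u \<noteq> -1" "s q2 u \<noteq> -1" using Nq1[of u] Nq2[of u] u(2) by auto
    then have e: "neg (s q1 u) + neg (s q2 u) = 0" by (simp add: neg_def)
    have nn: "\<not> (s q1 u = 1 \<and> s q2 u = 1)"
    proof
      assume "s q1 u = 1 \<and> s q2 u = 1"
      then have "s u q1 = 1" "s u q2 = 1" using sym by metis+
      moreover have "q1 \<noteq> q2" using D by auto
      ultimately have "s q1 q2 = 0" by (rule C(1))
      then show False using Z by simp
    qed
    have k: "pos (s q1 u) + pos (s q2 u) \<le> 1" using nn by (auto simp: pos_def)
    have cm: "neg (s p1 u) + neg (s p2 u) + neg (s p3 u) = pos (s q1 u) + pos (s q2 u)"
      using lab_comm_u[OF L ne u(1)] .
    have fd: "c = (pos (s p1 u) + pos (s p2 u) + pos (s p3 u)) - (neg (s p1 u) + neg (s p2 u) + neg (s p3 u))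
     - (pos (s q1 u) + pos (s q2 u)) + (neg (s q1 u) + neg (s q2 u))" using far_decomp[OF L u] .
    have "pos (s p1 u) + pos (s p2 u) + pos (s p3 u) \<ge> 0" by (simp add: pos_def)
    moreover have "pos (s q1 u) + pos (s q2 u) \<ge> 0" by (simp add: pos_def)
    ultimately have "pos (s q1 u) + pos (s q2 u) = 1" using e k cm fd cn by linarith
    then show ?thesis using e cm fd by linarith
  qed
  have p1V: "p1 \<in> V" by (rule lv(2))
  obtain y where y: "y \<in> Pos p1" "y \<noteq> x"
    using card3_third[OF fin_Pos card_PN[OF p1V, THEN conjunct1], of x x] ls(6) unfolding Pos_def by auto
  have sy: "s p1 y = 1" using y unfolding Pos_def by simp
  have yV: "y \<in> V" using supp1[OF sy] by blast
  have yn: "y \<notin> {x,p1,p2,p3,q1,q2}" using y(2) sy Z by auto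
  have "pos (s p1 y) = 1" using sy by (simp add: pos_def)
  moreover have "pos (s p2 y) \<ge> 0" "pos (s p3 y) \<ge> 0" by (simp_all add: pos_def)
  ultimately have c1: "c = -1" using F[OF yV yn] cn by linarith
  have q1V: "q1 \<in> V" by (rule lv(5))
  have "Pos q1 \<noteq> {}" using card_PN[OF q1V] by auto
  then obtain x' where sx': "s q1 x' = 1" unfolding Pos_def by auto
  have x'V: "x' \<in> V" using supp1[OF sx'] by blast
  have x'n: "x' \<notin> {x,p1,p2,p3,q1,q2}"
  proof -
    have "x' \<noteq> x" using sx' ls(9) by auto
    moreover have "x' \<noteq> p1" "x' \<noteq> p2" "x' \<noteq> p3" using sx' Z(4,6,8) S(4,6,8) by auto
    moreover have "x' \<noteq> q1" "x' \<noteq> q2" using sx' Z(10) by auto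
    ultimately show ?thesis by simp
  qed
  note Fx = F[OF x'V x'n, unfolded c1]
  have nq2: "s q2 x' \<noteq> 1" using Fx sx' by (auto simp: pos_def)
  have cP: "int (card (Pos x' \<inter> set [p1,p2,p3])) = 1"
  proof -
    have "int (card (Pos x' \<inter> set [p1,p2,p3])) = (\<Sum>y\<leftarrow>[p1,p2,p3]. if y \<in> Pos x' then 1 else 0)"
      by (rule card_inter_list) (use D in auto)
    also have "\<dots> = pos (s p1 x') + pos (s p2 x') + pos (s p3 x')"
      by (simp add: Pos_def pos_def sym[of x'])
    finally show ?thesis using Fx by simp
  qed
  have "\<exists>z\<in>Pos x'. z \<notin> insert q1 (Pos x' \<inter> {p1,p2,p3})"
  proof (rule ccontr)
    assume "\<not> ?thesis"
    then have "Pos x' \<subseteq> insert q1 (Pos x' \<inter> {p1,p2,p3})" by blast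
    then have "card (Pos x') \<le> card (insert q1 (Pos x' \<inter> {p1,p2,p3}))" by (rule card_mono[rotated]) simp
    also have "\<dots> \<le> Suc (card (Pos x' \<inter> {p1,p2,p3}))" by (simp add: card_insert_if)
    finally show False using cP card_PN[OF x'V] by simp
  qed
  then obtain z where z: "s x' z = 1" "z \<noteq> q1" "z \<notin> {p1,p2,p3}" unfolding Pos_def by auto
  have zV: "z \<in> V" using supp1[OF z(1)] by blast
  have "s x x' = 0" using far(2)[OF L x'V x'n] .
  then have zx: "z \<noteq> x" using z(1) sym by auto
  have zq2: "z \<noteq> q2" using z(1) nq2 sym by auto
  have zn: "z \<notin> {x,p1,p2,p3,q1,q2}" using zx zq2 z by auto
  note Fz = F[OF zV zn, unfolded c1]
  have imp: "s p x' \<noteq> 0 \<Longrightarrow> s p z = 0" if "p \<in> {p1,p2,p3}" for p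
  proof -
    assume h: "s p x' \<noteq> 0"
    have pz: "p \<noteq> z" using that z(3) by auto
    show "s p z = 0"
    proof (cases "s p x' = 1")
      case True
      then have "s x' p = 1" using sym[of x' p] by simp
      then show ?thesis using C(1)[of x' p z] z(1) pz by simp
    next
      case False
      then have "s p x' = -1" using h vals[of p x'] by auto
      then have "s x' p = -1" using sym[of x' p] by simp
      then have "s z p = 0" using C(3)[of x' z p] z(1) by simp
      then show ?thesis using sym[of z p] by simp
    qed
  qed
  have i1: "s p1 x' \<noteq> 0 \<Longrightarrow> s p1 z = 0" and i2: "s p2 x' \<noteq> 0 \<Longrightarrow> s p2 z = 0"
    and i3: "s p3 x' \<noteq> 0 \<Longrightarrow> s p3 z = 0" using imp by auto
  show False using Fx Fz i1 i2 i3 unfolding pos_def neg_def by (auto split: if_splits)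
qed

end

context srsg5 begin

lemma kill_20:
  assumes ne: "a + b \<noteq> 2*c" and ab: "a = 2" "b = 0" and x: "x \<in> V"
  shows False
proof -
  note C = cls[OF labvals_20[OF ne ab]]
  obtain p1 p2 p3 q1 q2 where L: "lab x p1 p2 p3 q1 q2" using lab_ex[OF x] by blast
  note ls = lab_s[OF L] and lv = lab_V[OF L]
  have D: "distinct [x,p1,p2,p3,q1,q2]" by (rule ls(14))
  have Z: "s p1 p2 = 1" "s p1 p3 = 1" "s p2 p3 = 1" "s p1 q1 = 0" "s p1 q2 = 0" "s p2 q1 = 0"
     "s p2 q2 = 0" "s p3 q1 = 0" "s p3 q2 = 0" "s q1 q2 = 0"
    using labvals_20[OF ne ab] L unfolding labvals_def by blast+
  have S: "s p2 p1 = s p1 p2" "s p3 p1 = s p1 p3" "s p3 p2 = s p2 p3" "s q1 p1 = s p1 q1" "s q2 p1 = s p1 q2"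
    "s q1 p2 = s p2 q1" "s q2 p2 = s p2 q2" "s q1 p3 = s p3 q1" "s q2 p3 = s p3 q2" "s q2 q1 = s q1 q2"
    by (simp_all add: sym)
  have r6: "c * (int (card V) - 6) = -10" using row[OF x] ab by simp
  have cn: "c < 0" using c_neg[OF L r6] by simp
  have Pp1: "s p1 w = 1 \<longleftrightarrow> w = x \<or> w = p2 \<or> w = p3" for w
    using Pos_eq3[OF lv(2), of x p2 p3] D ls(6) Z by auto
  have Pp2: "s p2 w = 1 \<longleftrightarrow> w = x \<or> w = p1 \<or> w = p3" for w
    using Pos_eq3[OF lv(3), of x p1 p3] D ls(7) Z S by auto
  have Pp3: "s p3 w = 1 \<longleftrightarrow> w = x \<or> w = p1 \<or> w = p2" for w
    using Pos_eq3[OF lv(4), of x p1 p2] D ls(8) Z S by auto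
  have F: "neg (s p1 u) + neg (s p2 u) + neg (s p3 u) = 1 \<and> neg (s q1 u) + neg (s q2 u) = c + 2"
    if u: "u \<in> V" "u \<notin> {x,p1,p2,p3,q1,q2}" for u
  proof -
    have "s p1 u \<noteq> 1" "s p2 u \<noteq> 1" "s p3 u \<noteq> 1" using Pp1[of u] Pp2[of u] Pp3[of u] u(2) by auto
    then have e: "pos (s p1 u) + pos (s p2 u) + pos (s p3 u) = 0" by (simp add: pos_def)
    have nn: "\<not> (s q1 u = 1 \<and> s q2 u = 1)"
    proof
      assume "s q1 u = 1 \<and> s q2 u = 1"
      then have "s u q1 = 1" "s u q2 = 1" using sym[of q1 u] sym[of q2 u] by simp_all
      moreover have "q1 \<noteq> q2" using D by auto
      ultimately have "s q1 q2 = 1" by (rule C(1))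
      then show False using Z by simp
    qed
    have k: "pos (s q1 u) + pos (s q2 u) \<le> 1" using nn by (auto simp: pos_def)
    have cm: "neg (s p1 u) + neg (s p2 u) + neg (s p3 u) = pos (s q1 u) + pos (s q2 u)"
      using lab_comm_u[OF L ne u(1)] .
    have fd: "c = (pos (s p1 u) + pos (s p2 u) + pos (s p3 u)) - (neg (s p1 u) + neg (s p2 u) + neg (s p3 u))
     - (pos (s q1 u) + pos (s q2 u)) + (neg (s q1 u) + neg (s q2 u))" using far_decomp[OF L u] .
    have "neg (s q1 u) + neg (s q2 u) \<ge> 0" by (simp add: neg_def)
    moreover have "pos (s q1 u) + pos (s q2 u) \<ge> 0" by (simp add: pos_def)
    ultimately have "pos (s q1 u) + pos (s q2 u) = 1" using e k cm fd cn by linarith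
    then show ?thesis using e cm fd by linarith
  qed
  obtain z1 where z1: "Neg q1 = {x, z1}" "z1 \<noteq> x"
    using card2_other[OF card_PN[OF lv(5), THEN conjunct2], of x] ls(9) unfolding Neg_def by auto
  obtain z2 where z2: "Neg q2 = {x, z2}" "z2 \<noteq> x"
    using card2_other[OF card_PN[OF lv(6), THEN conjunct2], of x] ls(10) unfolding Neg_def by auto
  have sz1: "s q1 z1 = -1" using z1 unfolding Neg_def by auto
  have z1V: "z1 \<in> V" using suppm[OF sz1] by blast
  have z1n: "z1 \<notin> {x,p1,p2,p3,q1,q2}" using z1(2) sz1 Z S by auto
  have "neg (s q1 z1) = 1" using sz1 by (simp add: neg_def)
  moreover have "neg (s q2 z1) \<ge> 0" by (simp add: neg_def)
  ultimately have c1: "c = -1" using F[OF z1V z1n] cn by linarith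
  have Fz: "u = z1 \<or> u = z2" if u: "u \<in> V" "u \<notin> {x,p1,p2,p3,q1,q2}" for u
  proof -
    have "neg (s q1 u) + neg (s q2 u) = 1" using F[OF u] c1 by simp
    then have "s q1 u = -1 \<or> s q2 u = -1" by (auto simp: neg_def split: if_splits)
    then have "u \<in> Neg q1 \<or> u \<in> Neg q2" unfolding Neg_def by auto
    then show ?thesis using z1 z2 u(2) by auto
  qed
  obtain y1 y1' where Y1: "Neg p1 = {y1, y1'}" "y1 \<noteq> y1'"
    using card_PN[OF lv(2)] card_2_iff by metis
  have sy1: "s p1 y1 = -1" "s p1 y1' = -1" using Y1 unfolding Neg_def by auto
  have "Neg p2 \<noteq> {}" using card_PN[OF lv(3)] by auto
  then obtain y2 where sy2: "s p2 y2 = -1" unfolding Neg_def by auto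
  have far_of: "u \<notin> {x,p1,p2,p3,q1,q2}" if "s p u = -1" "p \<in> {p1,p2,p3}" for p u
  proof -
    have "u \<noteq> x" using that ls(6-8) by auto
    moreover have "u \<noteq> p1" "u \<noteq> p2" "u \<noteq> p3" using that Z S by auto
    moreover have "u \<noteq> q1" "u \<noteq> q2" using that Z S by auto
    ultimately show ?thesis by simp
  qed
  have y1n: "y1 \<notin> {x,p1,p2,p3,q1,q2}" "y1' \<notin> {x,p1,p2,p3,q1,q2}" "y2 \<notin> {x,p1,p2,p3,q1,q2}"
    using far_of[OF sy1(1)] far_of[OF sy1(2)] far_of[OF sy2] by auto
  have yV: "y1 \<in> V" "y1' \<in> V" "y2 \<in> V" using suppm sy1 sy2 by blast+
  have "neg (s p1 y2) + neg (s p2 y2) + neg (s p3 y2) = 1" using F[OF yV(3) y1n(3)] by simp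
  then have "s p1 y2 \<noteq> -1" using sy2 by (auto simp: neg_def split: if_splits)
  then have "y2 \<noteq> y1" "y2 \<noteq> y1'" using sy1 by auto
  moreover have "y1 = z1 \<or> y1 = z2" "y1' = z1 \<or> y1' = z2" "y2 = z1 \<or> y2 = z2"
    using Fz[OF yV(1) y1n(1)] Fz[OF yV(2) y1n(2)] Fz[OF yV(3) y1n(3)] by auto
  ultimately show False using Y1(2) by auto
qed

end

context srsg5 begin

lemma a4_facts:
  assumes a4: "a = -4" and L: "lab y r1 r2 r3 t1 t2"
  shows "s r1 r2 = -1" "s r1 r3 = -1" "s r2 r3 = -1" "s r1 t1 = 1" "s r1 t2 = 1" "s r2 t1 = 1"
    "s r2 t2 = 1" "s r3 t1 = 1" "s r3 t2 = 1"
proof -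
  note ld = local_data[OF L]
  have B: "-1 \<le> s u v \<and> s u v \<le> 1" for u v using abs_s[of u v] by (simp add: abs_le_iff)
  have e1: "s r1 r2 + s r1 r3 - s r1 t1 - s r1 t2 = -4" using ld(11) a4 by simp
  have e2: "s r1 r2 + s r2 r3 - s r2 t1 - s r2 t2 = -4" using ld(12) a4 by simp
  have e3: "s r1 r3 + s r2 r3 - s r3 t1 - s r3 t2 = -4" using ld(13) a4 by simp
  show "s r1 r2 = -1" "s r1 r3 = -1" "s r1 t1 = 1" "s r1 t2 = 1"
    using e1 B[of r1 r2] B[of r1 r3] B[of r1 t1] B[of r1 t2] by linarith+
  show "s r2 r3 = -1" "s r2 t1 = 1" "s r2 t2 = 1"
    using e2 B[of r1 r2] B[of r2 r3] B[of r2 t1] B[of r2 t2] by linarith+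
  show "s r3 t1 = 1" "s r3 t2 = 1"
    using e3 B[of r1 r3] B[of r2 r3] B[of r3 t1] B[of r3 t2] by linarith+
qed

lemma five_Nb:
  assumes "z \<in> V" "distinct [e1,e2,e3,e4,e5]" "s z e1 \<noteq> 0" "s z e2 \<noteq> 0" "s z e3 \<noteq> 0" "s z e4 \<noteq> 0" "s z e5 \<noteq> 0"
  shows "Nb z = {e1,e2,e3,e4,e5}"
proof -
  have "{e1,e2,e3,e4,e5} \<subseteq> Nb z" using assms unfolding Nb_def by auto
  moreover have "card {e1,e2,e3,e4,e5} = card (Nb z)" using assms(2) card_Nb[OF assms(1)] by simp
  ultimately show ?thesis using card_subset_eq[OF fin_Nb] by blast
qed

lemma a4_pos:
  assumes a4: "a = -4" and h: "s y w = 1"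
  shows "Nb w \<subseteq> insert y (Nb y)"
proof -
  have yV: "y \<in> V" using supp1[OF h] by blast
  obtain r1 r2 r3 t1 t2 where L: "lab y r1 r2 r3 t1 t2" using lab_ex[OF yV] by blast
  note ls = lab_s[OF L] and lv = lab_V[OF L] and af = a4_facts[OF a4 L]
  have D: "distinct [y,r1,r2,r3,t1,t2]" by (rule ls(14))
  have NY: "insert y (Nb y) = {y,r1,r2,r3,t1,t2}" using Nb_lab[OF L] by simp
  have S: "s r2 r1 = s r1 r2" "s r3 r1 = s r1 r3" "s r3 r2 = s r2 r3" by (simp_all add: sym)
  have "w = r1 \<or> w = r2 \<or> w = r3" using ls(11) h by blast
  then show ?thesis
  proof (elim disjE)
    assume "w = r1"
    moreover have "Nb r1 = {y,r2,r3,t1,t2}"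
      by (rule five_Nb[OF lv(2)]) (use D ls(1-10) af in auto)
    ultimately show ?thesis unfolding NY by auto
  next
    assume "w = r2"
    moreover have "Nb r2 = {y,r1,r3,t1,t2}"
      by (rule five_Nb[OF lv(3)]) (use D ls(1-10) af S in auto)
    ultimately show ?thesis unfolding NY by auto
  next
    assume "w = r3"
    moreover have "Nb r3 = {y,r1,r2,t1,t2}"
      by (rule five_Nb[OF lv(4)]) (use D ls(1-10) af S in auto)
    ultimately show ?thesis unfolding NY by auto
  qed
qed

lemma a4_closed:
  assumes a4: "a = -4" and h: "s y w \<noteq> 0"
  shows "Nb w \<subseteq> insert y (Nb y)"
proof (cases "s y w = 1")
  case True then show ?thesis using a4_pos[OF a4] by blast
next
  case False
  then have h': "s y w = -1" using h vals[of y w] by auto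
  have yV: "y \<in> V" using suppm[OF h'] by blast
  obtain r1 r2 r3 t1 t2 where L: "lab y r1 r2 r3 t1 t2" using lab_ex[OF yV] by blast
  note ls = lab_s[OF L] and af = a4_facts[OF a4 L]
  have "w = t1 \<or> w = t2" using ls(12) h' by blast
  then have "s r1 w = 1" using af by auto
  then have "Nb w \<subseteq> insert r1 (Nb r1)" by (rule a4_pos[OF a4])
  moreover have "Nb r1 \<subseteq> insert y (Nb y)" using a4_pos[OF a4 ls(1)] .
  moreover have "r1 \<in> Nb y" using ls(1) unfolding Nb_def by simp
  ultimately show ?thesis by blast
qed

lemma kill_a4:
  assumes a4: "a = -4" and con: "sg_connected V s" and nc: "\<not> sg_complete V s"
  shows False
proof -
  obtain x where x: "x \<in> V" using con unfolding sg_connected_def by blast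
  define C where "C = insert x (Nb x)"
  have clo: "Nb w \<subseteq> C" if "w \<in> C" for w
  proof (cases "w = x")
    case True then show ?thesis unfolding C_def by blast
  next
    case False
    then have "s x w \<noteq> 0" using that unfolding C_def Nb_def by auto
    then show ?thesis using a4_closed[OF a4] unfolding C_def by blast
  qed
  have reach: "u \<in> C" if "(\<lambda>x y. s x y \<noteq> 0)\<^sup>*\<^sup>* x u" for u
    using that
  proof (induction rule: rtranclp_induct)
    case base then show ?case unfolding C_def by blast
  next
    case (step y z)
    then have "z \<in> Nb y" unfolding Nb_def by simp
    then show ?case using clo[OF step.IH] by blast
  qed
  have VC: "V \<subseteq> C" using con x reach unfolding sg_connected_def by blast
  obtain u v where uv: "u \<in> V" "v \<in> V" "u \<noteq> v" "s u v = 0" using nc unfolding sg_complete_def by blast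
  have xN: "x \<notin> Nb x" unfolding Nb_def by simp
  have cC: "card C = 6" unfolding C_def using card_Nb[OF x] xN fin_Nb by simp
  have uC: "u \<in> C" "v \<in> C" using VC uv by auto
  have uN: "u \<notin> Nb u" unfolding Nb_def by simp
  have sub: "Nb u \<subseteq> C - {u}" using clo[OF uC(1)] uN by blast
  have finC: "finite C" unfolding C_def using fin_Nb by simp
  have "card (C - {u}) = 5" using cC uC(1) finC by simp
  then have "Nb u = C - {u}" using card_subset_eq[OF _ sub] card_Nb[OF uv(1)] finC by simp
  then have "v \<in> Nb u" using uC(2) uv(3) by blast
  then show False using uv(4) unfolding Nb_def by simp
qed

lemma card_ge7:
  assumes nc: "\<not> sg_complete V s" shows "card V \<ge> 7"
proof -
  obtain u v where uv: "u \<in> V" "v \<in> V" "u \<noteq> v" "s u v = 0" using nc unfolding sg_complete_def by blast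
  have "v \<notin> Nb u" "u \<notin> Nb u" using uv unfolding Nb_def by auto
  then have "card (insert v (insert u (Nb u))) = 7" using card_Nb[OF uv(1)] fin_Nb uv(3) by simp
  moreover have "insert v (insert u (Nb u)) \<subseteq> V" using uv Nb_sub by blast
  ultimately show ?thesis using card_mono[OF fin] by metis
qed

lemma cn_zero: "(c::int) * n \<ge> -6 \<Longrightarrow> c * n \<le> 0 \<Longrightarrow> n \<ge> 7 \<Longrightarrow> c = 0"
proof (rule ccontr)
  assume h: "c * n \<ge> -6" "c * n \<le> 0" "n \<ge> 7" "c \<noteq> 0"
  show False
  proof (cases "c > 0")
    case True
    then have "c * n \<ge> 1 * 7" using h(3) by (intro mult_mono) auto
    then show False using h(2) by simp
  next
    case False
    then have "c \<le> -1" using h(4) by simp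
    then have "c * n \<le> -1 * n" using h(3) by (intro mult_right_mono) auto
    then show False using h(1) h(3) by simp
  qed
qed

lemma kill_eq:
  assumes eq: "a + b = 2*c" and con: "sg_connected V s" and nc: "\<not> sg_complete V s"
  shows False
proof -
  obtain x where x: "x \<in> V" using con unfolding sg_connected_def by blast
  obtain p1 p2 p3 q1 q2 where L: "lab x p1 p2 p3 q1 q2" using lab_ex[OF x] by blast
  note ld = local_data[OF L]
  have b1: "b \<ge> -2" by (rule local_bbound[OF abs_s abs_s abs_s abs_s ld(8) ld(14)])
  have b2: "b \<le> 4" using ld(14) abs_s[of p1 q1] abs_s[of p2 q1] abs_s[of p3 q1] abs_s[of q1 q2]
    by (simp add: abs_le_iff)
  have n7: "int (card V) \<ge> 7" using card_ge7[OF nc] by simp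
  have "3*a + 2*b + c*(int (card V) - 6) = -4" by (rule row[OF x])
  then have bb: "b = c * int (card V) + 4" using eq by (simp add: algebra_simps)
  have "c = 0" by (rule cn_zero[OF _ _ n7]) (use bb b1 b2 in linarith)+
  then have "a = -4" using eq bb by simp
  then show False using kill_a4 con nc by blast
qed

end

context srsg5 begin

lemma complete_iso:
  assumes comp: "sg_complete V s" and x: "x \<in> V"
  shows "sg_iso V s G2_V G2_sig"
proof -
  obtain p1 p2 p3 q1 q2 where L: "lab x p1 p2 p3 q1 q2" using lab_ex[OF x] by blast
  note ls = lab_s[OF L] and lv = lab_V[OF L] and ld = local_data[OF L]
  have D: "distinct [x,p1,p2,p3,q1,q2]" by (rule ls(14))
  have Veq: "V = {x,p1,p2,p3,q1,q2}"
  proof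
    show "V \<subseteq> {x,p1,p2,p3,q1,q2}"
    proof
      fix u assume u: "u \<in> V"
      show "u \<in> {x,p1,p2,p3,q1,q2}"
      proof (cases "u = x")
        case False
        then have "s x u \<noteq> 0" using comp x u unfolding sg_complete_def by auto
        then show ?thesis using ls(13)[of u] by auto
      qed simp
    qed
    show "{x,p1,p2,p3,q1,q2} \<subseteq> V" using lv by auto
  qed
  have nz: "s u v \<noteq> 0" if "u \<in> V" "v \<in> V" "u \<noteq> v" for u v
    using comp that unfolding sg_complete_def by blast
  have A: "\<bar>s u v\<bar> = 1" if "u \<in> V" "v \<in> V" "u \<noteq> v" for u v
    using nz[OF that] vals[of u v] by auto
  have q12: "s q1 q2 = -1"
    by (rule local_complete[OF A A A A A A A A A A ld]) (use lv D in auto)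
  have S: "s p2 p1 = s p1 p2" "s p3 p1 = s p1 p3" "s p3 p2 = s p2 p3" "s q1 p1 = s p1 q1" "s q2 p1 = s p1 q2"
    "s q1 p2 = s p2 q1" "s q2 p2 = s p2 q2" "s q1 p3 = s p3 q1" "s q2 p3 = s p3 q2" "s q2 q1 = s q1 q2"
    by (simp_all add: sym)
  have xq: "x \<noteq> q2" "x \<noteq> q1" using D by auto
  have z21: "s q2 q1 = -1" using q12 S(10) by simp
  have Nq1: "s q1 w = -1 \<longleftrightarrow> w = x \<or> w = q2" for w
    using Neg_eq2[OF lv(5) xq(1) ls(9) q12] .
  have Nq2: "s q2 w = -1 \<longleftrightarrow> w = x \<or> w = q1" for w
    using Neg_eq2[OF lv(6) xq(2) ls(10) z21] .
  have pq: "s p q = 1" if "p \<in> {p1,p2,p3}" "q \<in> {q1,q2}" for p q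
  proof -
    have "s q p \<noteq> -1" using that Nq1[of p] Nq2[of p] D by auto
    moreover have "s q p \<noteq> 0" using nz[of q p] that lv D by auto
    ultimately have "s q p = 1" using vals[of q p] by auto
    then show ?thesis using sym[of q p] by simp
  qed
  have pp: "s p p' = -1" if "p \<in> {p1,p2,p3}" "p' \<in> {p1,p2,p3}" "p \<noteq> p'" for p p'
  proof -
    have pV: "p \<in> V" using that lv by auto
    obtain w1 w2 where W: "Neg p = {w1,w2}" "w1 \<noteq> w2" using card_PN[OF pV] card_2_iff by metis
    have inP: "w \<in> {p1,p2,p3} - {p}" if "w \<in> Neg p" for w
    proof -
      have sw: "s p w = -1" using that unfolding Neg_def by simp
      then have "w \<in> V" using suppm by blast
      moreover have "w \<noteq> x" using sw ls(6-8) \<open>p \<in> {p1,p2,p3}\<close> by auto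
      moreover have "w \<noteq> q1" "w \<noteq> q2" using sw pq[OF \<open>p \<in> {p1,p2,p3}\<close>] by auto
      moreover have "w \<noteq> p" using sw by auto
      ultimately show ?thesis unfolding Veq by auto
    qed
    have "{w1,w2} \<subseteq> {p1,p2,p3} - {p}" using inP W(1) by blast
    moreover have "card ({p1,p2,p3} - {p}) = 2" using that(1) D by auto
    ultimately have "{w1,w2} = {p1,p2,p3} - {p}" using W(2) card_subset_eq[of "{p1,p2,p3} - {p}" "{w1,w2}"] by simp
    then have "p' \<in> Neg p" using W(1) that by auto
    then show ?thesis unfolding Neg_def by simp
  qed
  define f :: "'a \<Rightarrow> nat" where "f u = (if u = x then 0 else if u = q1 then 1 else if u = q2 then 2
      else if u = p1 then 3 else if u = p2 then 4 else 5)" for u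
  have fv: "f x = 0" "f q1 = 1" "f q2 = 2" "f p1 = 3" "f p2 = 4" "f p3 = 5" using D unfolding f_def by auto
  have inj: "inj_on f V" unfolding Veq inj_on_def using fv by auto
  have img: "f ` V = G2_V" unfolding Veq G2_V_def using fv by auto
  have T: "s p1 p2 = -1" "s p1 p3 = -1" "s p2 p3 = -1" "s p1 q1 = 1" "s p1 q2 = 1" "s p2 q1 = 1"
    "s p2 q2 = 1" "s p3 q1 = 1" "s p3 q2 = 1"
    using pp pq D by auto
  have sp: "G2_sig (f u) (f v) = s u v" if "u \<in> V" "v \<in> V" for u v
    using that unfolding Veq using fv T S q12 ls(1-10) by (auto simp: G2_sig_simp)
  show ?thesis unfolding sg_iso_def bij_betw_def using inj img sp by blast
qed

end

lemma k01: "(k::int) \<ge> 0 \<Longrightarrow> k \<le> 1 \<Longrightarrow> c = -2 * k \<Longrightarrow> c < 0 \<Longrightarrow> c = -2 \<and> k = 1"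
  by (cases "k = 0") auto

lemma S12_sig_in: "x \<in> S12_V \<Longrightarrow> y \<in> S12_V \<Longrightarrow> S12_sig x y =
   (if snd x = snd y \<and> fst x \<noteq> fst y then 1 else if fst x = fst y \<and> snd x \<noteq> snd y then -1 else 0)"
  unfolding S12_sig_def by (rule if_P) (rule conjI)

context srsg5 begin

lemma s21_iso:
  assumes ne: "a + b \<noteq> 2*c" and ab: "a = 2" "b = 1" and x: "x \<in> V"
  shows "sg_iso V s S12_V S12_sig"
proof -
  note C = cls[OF labvals_21[OF ne ab]]
  obtain p1 p2 p3 q1 q2 where L: "lab x p1 p2 p3 q1 q2" using lab_ex[OF x] by blast
  note ls = lab_s[OF L] and lv = lab_V[OF L]
  have D: "distinct [x,p1,p2,p3,q1,q2]" by (rule ls(14))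
  have Z: "s p1 p2 = 1" "s p1 p3 = 1" "s p2 p3 = 1" "s p1 q1 = 0" "s p1 q2 = 0" "s p2 q1 = 0"
     "s p2 q2 = 0" "s p3 q1 = 0" "s p3 q2 = 0" "s q1 q2 = -1"
    using labvals_21[OF ne ab] L unfolding labvals_def by blast+
  have S: "s p2 p1 = s p1 p2" "s p3 p1 = s p1 p3" "s p3 p2 = s p2 p3" "s q1 p1 = s p1 q1" "s q2 p1 = s p1 q2"
    "s q1 p2 = s p2 q1" "s q2 p2 = s p2 q2" "s q1 p3 = s p3 q1" "s q2 p3 = s p3 q2" "s q2 q1 = s q1 q2"
    by (simp_all add: sym)
  have r6: "c * (int (card V) - 6) = -12" using row[OF x] ab by simp
  have cn: "c < 0" using c_neg[OF L r6] by simp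
  have Pp1: "s p1 w = 1 \<longleftrightarrow> w = x \<or> w = p2 \<or> w = p3" for w
    using Pos_eq3[OF lv(2), of x p2 p3] D ls(6) Z by auto
  have Pp2: "s p2 w = 1 \<longleftrightarrow> w = x \<or> w = p1 \<or> w = p3" for w
    using Pos_eq3[OF lv(3), of x p1 p3] D ls(7) Z S by auto
  have Pp3: "s p3 w = 1 \<longleftrightarrow> w = x \<or> w = p1 \<or> w = p2" for w
    using Pos_eq3[OF lv(4), of x p1 p2] D ls(8) Z S by auto
  have xq: "x \<noteq> q2" "x \<noteq> q1" using D by auto
  have z21: "s q2 q1 = -1" using Z(10) S(10) by simp
  have Nq1: "s q1 w = -1 \<longleftrightarrow> w = x \<or> w = q2" for w
    using Neg_eq2[OF lv(5) xq(1) ls(9) Z(10)] .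
  have Nq2: "s q2 w = -1 \<longleftrightarrow> w = x \<or> w = q1" for w
    using Neg_eq2[OF lv(6) xq(2) ls(10) z21] .
  have F: "neg (s p1 u) + neg (s p2 u) + neg (s p3 u) = pos (s q1 u) + pos (s q2 u) \<and> c = -2 * (pos (s q1 u) + pos (s q2 u))"
    if u: "u \<in> V" "u \<notin> {x,p1,p2,p3,q1,q2}" for u
  proof -
    have "s p1 u \<noteq> 1" "s p2 u \<noteq> 1" "s p3 u \<noteq> 1" using Pp1[of u] Pp2[of u] Pp3[of u] u(2) by auto
    then have e: "pos (s p1 u) + pos (s p2 u) + pos (s p3 u) = 0" by (simp add: pos_def)
    have "s q1 u \<noteq> -1" "s q2 u \<noteq> -1" using Nq1[of u] Nq2[of u] u(2) by auto
    then have e2: "neg (s q1 u) + neg (s q2 u) = 0" by (simp add: neg_def)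
    have cm: "neg (s p1 u) + neg (s p2 u) + neg (s p3 u) = pos (s q1 u) + pos (s q2 u)"
      using lab_comm_u[OF L ne u(1)] .
    have fd: "c = (pos (s p1 u) + pos (s p2 u) + pos (s p3 u)) - (neg (s p1 u) + neg (s p2 u) + neg (s p3 u))
     - (pos (s q1 u) + pos (s q2 u)) + (neg (s q1 u) + neg (s q2 u))" using far_decomp[OF L u] .
    have "c = - (pos (s q1 u) + pos (s q2 u)) - (pos (s q1 u) + pos (s q2 u))" using e e2 cm fd by linarith
    then show ?thesis using cm by simp
  qed
  have F2: "pos (s q1 u) + pos (s q2 u) \<le> 1" for u
  proof -
    have "\<not> (s q1 u = 1 \<and> s q2 u = 1)"
    proof
      assume "s q1 u = 1 \<and> s q2 u = 1"
      then have "s u q1 = 1" "s u q2 = 1" using sym[of q1 u] sym[of q2 u] by simp_all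
      moreover have "q1 \<noteq> q2" using D by auto
      ultimately have "s q1 q2 = 1" by (rule C(1))
      then show False using Z by simp
    qed
    then show ?thesis by (auto simp: pos_def)
  qed
  have "card V \<noteq> 6" using r6 by auto
  then obtain u0 where u0: "u0 \<in> V" "u0 \<notin> {x,p1,p2,p3,q1,q2}" using ex_far[OF L] by blast
  have "pos (s q1 u0) + pos (s q2 u0) \<ge> 0" by (simp add: pos_def)
  moreover have "c = -2 * (pos (s q1 u0) + pos (s q2 u0))" using F[OF u0, THEN conjunct2] .
  moreover note F2[of u0] cn
  ultimately have c2: "c = -2" using k01 by blast
  then have n12: "card V = 12" using r6 by simp
  have Ffar: "neg (s p1 u) + neg (s p2 u) + neg (s p3 u) = 1 \<and> pos (s q1 u) + pos (s q2 u) = 1"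
    if "u \<in> V" "u \<notin> {x,p1,p2,p3,q1,q2}" for u
  proof -
    have "pos (s q1 u) + pos (s q2 u) = 1" using F[OF that, THEN conjunct2] c2 by simp
    then show ?thesis using F[OF that, THEN conjunct1] by simp
  qed
  define K where "K = {x,p1,p2,p3}"
  define T where "T = {x,q1,q2}"
  have Kpos: "s k1 k2 = 1" if "k1 \<in> K" "k2 \<in> K" "k1 \<noteq> k2" for k1 k2
    using that ls(1-10) Z S unfolding K_def by auto
  have Tneg: "s t1 t2 = -1" if "t1 \<in> T" "t2 \<in> T" "t1 \<noteq> t2" for t1 t2
    using that ls(1-10) Z S unfolding T_def by auto
  define cK where "cK u k \<longleftrightarrow> k \<in> K \<and> (k = u \<or> s u k = -1)" for u k
  define cT where "cT u t \<longleftrightarrow> t \<in> T \<and> (t = u \<or> s u t = 1)" for u t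
  have uK: "k1 = k2" if "cK u k1" "cK u k2" for u k1 k2
  proof (rule ccontr)
    assume ne12: "k1 \<noteq> k2"
    have k: "k1 \<in> K" "k2 \<in> K" using that unfolding cK_def by auto
    have p: "s k1 k2 = 1" using Kpos[OF k ne12] .
    show False
    proof (cases "k1 = u")
      case True
      then have "s u k2 = -1" using that(2) ne12 unfolding cK_def by auto
      then show False using p True by simp
    next
      case False
      then have h1: "s u k1 = -1" using that(1) unfolding cK_def by auto
      show False
      proof (cases "k2 = u")
        case True
        then have "s k2 k1 = -1" using h1 by simp
        then show False using p sym[of k1 k2] by simp
      next
        case False
        then have "s u k2 = -1" using that(2) unfolding cK_def by auto
        then have "s k1 k2 = -1" using C(2)[OF h1 _ ne12] by simp
        then show False using p by simp
      qed
    qed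
  qed
  have uT: "t1 = t2" if "cT u t1" "cT u t2" for u t1 t2
  proof (rule ccontr)
    assume ne12: "t1 \<noteq> t2"
    have t: "t1 \<in> T" "t2 \<in> T" using that unfolding cT_def by auto
    have p: "s t1 t2 = -1" using Tneg[OF t ne12] .
    show False
    proof (cases "t1 = u")
      case True
      then have "s u t2 = 1" using that(2) ne12 unfolding cT_def by auto
      then show False using p True by simp
    next
      case False
      then have h1: "s u t1 = 1" using that(1) unfolding cT_def by auto
      show False
      proof (cases "t2 = u")
        case True
        then have "s t2 t1 = 1" using h1 by simp
        then show False using p sym[of t1 t2] by simp
      next
        case False
        then have "s u t2 = 1" using that(2) unfolding cT_def by auto
        then have "s t1 t2 = 1" using C(1)[OF h1 _ ne12] by simp
        then show False using p by simp
      qed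
    qed
  qed
  have eK: "\<exists>k. cK u k" if u: "u \<in> V" for u
  proof (cases "u \<in> {x,p1,p2,p3,q1,q2}")
    case True
    then consider "u \<in> K" | "u = q1" | "u = q2" unfolding K_def by auto
    then show ?thesis
    proof cases
      case 1 then show ?thesis unfolding cK_def by blast
    next
      case 2 then have "cK u x" using ls(9) unfolding cK_def K_def by auto
      then show ?thesis by blast
    next
      case 3 then have "cK u x" using ls(10) unfolding cK_def K_def by auto
      then show ?thesis by blast
    qed
  next
    case False
    then have "neg (s p1 u) + neg (s p2 u) + neg (s p3 u) = 1" using Ffar[OF u] by simp
    then have "s p1 u = -1 \<or> s p2 u = -1 \<or> s p3 u = -1" by (auto simp: neg_def split: if_splits)
    then have "s u p1 = -1 \<or> s u p2 = -1 \<or> s u p3 = -1" using sym[of u] by auto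
    then show ?thesis unfolding cK_def K_def by blast
  qed
  have eT: "\<exists>t. cT u t" if u: "u \<in> V" for u
  proof (cases "u \<in> {x,p1,p2,p3,q1,q2}")
    case True
    then consider "u \<in> T" | "u = p1" | "u = p2" | "u = p3" unfolding T_def by auto
    then show ?thesis
    proof cases
      case 1 then show ?thesis unfolding cT_def by blast
    qed (use ls(6-8) in \<open>auto simp: cT_def T_def\<close>)
  next
    case False
    then have "pos (s q1 u) + pos (s q2 u) = 1" using Ffar[OF u] by simp
    then have "s q1 u = 1 \<or> s q2 u = 1" by (auto simp: pos_def split: if_splits)
    then have "s u q1 = 1 \<or> s u q2 = 1" using sym[of u] by auto
    then show ?thesis unfolding cT_def T_def by blast
  qed
  define sK where "sK u = (THE k. cK u k)" for u
  define sT where "sT u = (THE t. cT u t)" for u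
  have sK: "cK u (sK u)" if "u \<in> V" for u
    unfolding sK_def using eK[OF that] uK by (metis theI)
  have sT: "cT u (sT u)" if "u \<in> V" for u
    unfolding sT_def using eT[OF that] uT by (metis theI)
  have R1: "sK u = sK v \<longleftrightarrow> (u = v \<or> s u v = -1)" if uv: "u \<in> V" "v \<in> V" for u v
  proof
    assume eq: "sK u = sK v"
    show "u = v \<or> s u v = -1"
    proof (cases "u = v")
      case False
      define k where "k = sK u"
      have cu: "cK u k" and cv: "cK v k" using sK[OF uv(1)] sK[OF uv(2)] eq unfolding k_def by auto
      show ?thesis
      proof (cases "k = u")
        case True
        then have "s v u = -1" using cv False unfolding cK_def by auto
        then show ?thesis using sym[of u v] by simp
      next
        case ku: False
        then have h1: "s u k = -1" using cu unfolding cK_def by auto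
        show ?thesis
        proof (cases "k = v")
          case True then show ?thesis using h1 by simp
        next
          case False
          then have "s v k = -1" using cv unfolding cK_def by auto
          then have "s k u = -1" "s k v = -1" using h1 sym[of u k] sym[of v k] by simp_all
          then show ?thesis using C(2)[of k u v] \<open>u \<noteq> v\<close> by simp
        qed
      qed
    qed simp
  next
    assume h: "u = v \<or> s u v = -1"
    show "sK u = sK v"
    proof (cases "u = v")
      case False
      then have suv: "s u v = -1" using h by simp
      define k where "k = sK u"
      have cu: "cK u k" using sK[OF uv(1)] unfolding k_def by simp
      have "cK v k"
      proof (cases "k = u")
        case True
        then have "s v k = -1" using suv sym[of u v] by simp
        then show ?thesis using cu unfolding cK_def by simp
      next
        case False
        then have h1: "s u k = -1" using cu unfolding cK_def by auto
        show ?thesis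
        proof (cases "v = k")
          case True then show ?thesis using cu unfolding cK_def by simp
        next
          case False
          then have "s v k = -1" using C(2)[OF suv h1 False] by simp
          then show ?thesis using cu unfolding cK_def by simp
        qed
      qed
      then show ?thesis using uK[OF sK[OF uv(2)]] unfolding k_def by simp
    qed simp
  qed
  have R2: "sT u = sT v \<longleftrightarrow> (u = v \<or> s u v = 1)" if uv: "u \<in> V" "v \<in> V" for u v
  proof
    assume eq: "sT u = sT v"
    show "u = v \<or> s u v = 1"
    proof (cases "u = v")
      case False
      define k where "k = sT u"
      have cu: "cT u k" and cv: "cT v k" using sT[OF uv(1)] sT[OF uv(2)] eq unfolding k_def by auto
      show ?thesis
      proof (cases "k = u")
        case True
        then have "s v u = 1" using cv False unfolding cT_def by auto
        then show ?thesis using sym[of u v] by simp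
      next
        case ku: False
        then have h1: "s u k = 1" using cu unfolding cT_def by auto
        show ?thesis
        proof (cases "k = v")
          case True then show ?thesis using h1 by simp
        next
          case False
          then have "s v k = 1" using cv unfolding cT_def by auto
          then have "s k u = 1" "s k v = 1" using h1 sym[of u k] sym[of v k] by simp_all
          then show ?thesis using C(1)[of k u v] \<open>u \<noteq> v\<close> by simp
        qed
      qed
    qed simp
  next
    assume h: "u = v \<or> s u v = 1"
    show "sT u = sT v"
    proof (cases "u = v")
      case False
      then have suv: "s u v = 1" using h by simp
      define k where "k = sT u"
      have cu: "cT u k" using sT[OF uv(1)] unfolding k_def by simp
      have "cT v k"
      proof (cases "k = u")
        case True
        then have "s v k = 1" using suv sym[of u v] by simp
        then show ?thesis using cu unfolding cT_def by simp
      next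
        case False
        then have h1: "s u k = 1" using cu unfolding cT_def by auto
        show ?thesis
        proof (cases "v = k")
          case True then show ?thesis using cu unfolding cT_def by simp
        next
          case False
          then have "s v k = 1" using C(1)[OF suv h1 False] by simp
          then show ?thesis using cu unfolding cT_def by simp
        qed
      qed
      then show ?thesis using uT[OF sT[OF uv(2)]] unfolding k_def by simp
    qed simp
  qed
  define iK :: "'a \<Rightarrow> nat" where "iK k = (if k = x then 1 else if k = p1 then 2 else if k = p2 then 3 else 4)" for k
  define iT :: "'a \<Rightarrow> nat" where "iT t = (if t = x then 1 else if t = q1 then 2 else 3)" for t
  have iKinj: "iK k1 = iK k2 \<longleftrightarrow> k1 = k2" if "k1 \<in> K" "k2 \<in> K" for k1 k2
    using that D unfolding iK_def K_def by auto
  have iTinj: "iT t1 = iT t2 \<longleftrightarrow> t1 = t2" if "t1 \<in> T" "t2 \<in> T" for t1 t2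
    using that D unfolding iT_def T_def by auto
  have iKr: "iK k \<in> {1..4}" for k unfolding iK_def by auto
  have iTr: "iT t \<in> {1..3}" for t unfolding iT_def by auto
  define f where "f u = (iK (sK u), iT (sT u))" for u
  have fV: "f u \<in> S12_V" for u unfolding f_def S12_V_def using iKr iTr by auto
  have ff: "fst (f u) = fst (f v) \<longleftrightarrow> (u = v \<or> s u v = -1)" if "u \<in> V" "v \<in> V" for u v
  proof -
    have "sK u \<in> K" "sK v \<in> K" using sK that unfolding cK_def by auto
    then show ?thesis unfolding f_def using iKinj R1[OF that] by simp
  qed
  have fs: "snd (f u) = snd (f v) \<longleftrightarrow> (u = v \<or> s u v = 1)" if "u \<in> V" "v \<in> V" for u v
  proof -
    have "sT u \<in> T" "sT v \<in> T" using sT that unfolding cT_def by auto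
    then show ?thesis unfolding f_def using iTinj R2[OF that] by simp
  qed
  have inj: "inj_on f V"
  proof (rule inj_onI)
    fix u v assume uv: "u \<in> V" "v \<in> V" "f u = f v"
    then have "u = v \<or> s u v = -1" "u = v \<or> s u v = 1" using ff[OF uv(1,2)] fs[OF uv(1,2)] by auto
    then show "u = v" by auto
  qed
  have sp: "S12_sig (f u) (f v) = s u v" if uv: "u \<in> V" "v \<in> V" for u v
  proof -
    have e: "S12_sig (f u) (f v) = (if snd (f u) = snd (f v) \<and> fst (f u) \<noteq> fst (f v) then 1
        else if fst (f u) = fst (f v) \<and> snd (f u) \<noteq> snd (f v) then -1 else 0)"
      by (rule S12_sig_in[OF fV fV])
    show ?thesis
    proof (cases "u = v")
      case True then show ?thesis unfolding e by simp
    next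
      case False
      note f1 = ff[OF uv] and f2 = fs[OF uv]
      consider "s u v = 1" | "s u v = -1" | "s u v = 0" using vals[of u v] by auto
      then show ?thesis
      proof cases
        case 1 then show ?thesis unfolding e using f1 f2 False by simp
      next
        case 2 then show ?thesis unfolding e using f1 f2 False by simp
      next
        case 3 then show ?thesis unfolding e using f1 f2 False by simp
      qed
    qed
  qed
  have "f ` V \<subseteq> S12_V" using fV by auto
  moreover have "card (f ` V) = card S12_V" using card_image[OF inj] n12 S12_card by simp
  moreover have "finite S12_V" unfolding S12_V_L by simp
  ultimately have img: "f ` V = S12_V"
    using card_subset_eq[of S12_V "f ` V"] by simp
  show ?thesis unfolding sg_iso_def bij_betw_def using inj img sp by blast
qed

end

lemma diag5:
  assumes sg: "signed_graph V s" and reg: "sg_regular V s 5" and x: "x \<in> V"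
  shows "adj_sq V s x x = 5"
proof -
  have fin: "finite V" using sg unfolding signed_graph_def by blast
  have pt: "s x w * s w x = (if s x w \<noteq> 0 then 1 else 0)" for w
  proof -
    have "s w x = s x w" using sg unfolding signed_graph_def by metis
    moreover have "s x w \<in> {-1,0,1}" using sg unfolding signed_graph_def by blast
    ultimately show ?thesis by auto
  qed
  have "adj_sq V s x x = (\<Sum>w\<in>V. if s x w \<noteq> 0 then 1 else 0)" unfolding adj_sq_def pt ..
  also have "\<dots> = (\<Sum>w\<in>{w\<in>V. s x w \<noteq> 0}. 1)" by (rule sum.inter_filter[symmetric, OF fin])
  also have "\<dots> = int (card {w\<in>V. s x w \<noteq> 0})" by simp
  also have "\<dots> = 5" using reg x unfolding sg_regular_def sg_degree_def by simp
  finally show ?thesis .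
qed

lemma classify:
  fixes V :: "'a set" and \<sigma> :: "'a \<Rightarrow> 'a \<Rightarrow> int"
  assumes SR: "SRSG V \<sigma>" and con: "sg_connected V \<sigma>" and reg: "sg_regular V \<sigma> 5" and net: "net_regular V \<sigma> 1"
  shows "sg_iso V \<sigma> G2_V G2_sig \<or> sg_iso V \<sigma> S12_V S12_sig"
proof -
  have sg: "signed_graph V \<sigma>" using SR unfolding SRSG_def by blast
  obtain r a b c where cd: "srsg_conds V \<sigma> r a b c" using SR unfolding SRSG_def by blast
  obtain x where x: "x \<in> V" using con unfolding sg_connected_def by blast
  have "adj_sq V \<sigma> x x = int r" using cd x unfolding srsg_conds_def by blast
  then have "r = 5" using diag5[OF sg reg x] by simp
  then have cd5: "srsg_conds V \<sigma> 5 a b c" using cd by simp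
  interpret srsg5 V \<sigma> a b c by (unfold_locales) (fact sg cd5 reg net)+
  show ?thesis
  proof (cases "sg_complete V \<sigma>")
    case True
    then show ?thesis using complete_iso x by blast
  next
    case nc: False
    show ?thesis
    proof (cases "a + b = 2*c")
      case True
      then show ?thesis using kill_eq con nc by blast
    next
      case ne: False
      obtain p1 p2 p3 q1 q2 where L: "lab x p1 p2 p3 q1 q2" using lab_ex[OF x] by blast
      have "a = -4 \<or> (a = 0 \<and> b = 0) \<or> (a = 0 \<and> b = 1) \<or> (a = 2 \<and> b = 0) \<or> (a = 2 \<and> b = 1) \<or> (a = 2 \<and> b = -2)"
        using local_at[OF L ne] by blast
      then show ?thesis
      proof (elim disjE conjE)
        assume "a = -4" then show ?thesis using kill_a4 con nc by blast
      next
        assume "a = 0" "b = 0" then show ?thesis using kill_00[OF ne _ _ x] by blast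
      next
        assume "a = 0" "b = 1" then show ?thesis using kill_01[OF ne _ _ x] by blast
      next
        assume "a = 2" "b = 0" then show ?thesis using kill_20[OF ne _ _ x] by blast
      next
        assume "a = 2" "b = 1" then show ?thesis using s21_iso[OF ne _ _ x] by blast
      next
        assume "a = 2" "b = -2" then show ?thesis using kill_2m2[OF ne _ _ x] by blast
      qed
    qed
  qed
qed

theorem theorem3p11:
  shows "srsg_params_complete G2_V G2_sig 6 5 (-4) 4
       \<and> sg_connected G2_V G2_sig \<and> sg_regular G2_V G2_sig 5 \<and> net_regular G2_V G2_sig 1
       \<and> srsg_params S12_V S12_sig 12 5 2 1 (-2)
       \<and> sg_connected S12_V S12_sig \<and> sg_regular S12_V S12_sig 5 \<and> net_regular S12_V S12_sig 1
       \<and> \<not> sg_iso G2_V G2_sig S12_V S12_sig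
       \<and> (\<forall>(V :: 'a set) \<sigma>. SRSG V \<sigma> \<and> sg_connected V \<sigma> \<and> sg_regular V \<sigma> 5 \<and> net_regular V \<sigma> 1
            \<longrightarrow> sg_iso V \<sigma> G2_V G2_sig \<or> sg_iso V \<sigma> S12_V S12_sig)"
  using G2_params G2_connected G2_regular G2_net S12_params S12_connected S12_regular S12_net
    not_iso_G2_S12 classify by blast

end
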